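(* Let $p$ be the characteristic of $\mathbb{F}_q$, $t\ge1$, $l\ge1$ with $\gcd(l,p)=1$, and $m=lp^t$, so that $x^{m}-1=\prod_{s\in T_l}M_s(x)^{p^t}$. Let $v_1,v_2\in\mathcal{R}=\mathbb{F}_q[x]/(x^m-1)$ with $\gcd(v_1v_2-1,x^m-1)=1$, and for each $s\in T_l$ let $r_{1s},r_{2s}$ be integers with $0<r_{1s}<r_{2s}<p^t-r_{2(-s)}$. Let $\mathcal{C}$ be the QC code of length $2m$ generated by $\big(\prod_{s}M_s^{r_{1s}},\,v_1\prod_sM_s^{r_{1s}}\big)$ and $\big(v_2\prod_sM_s^{r_{2s}},\,\prod_sM_s^{r_{2s}}\big)$ (products over $s\in T_l$). Then $\mathcal{C}^{\perp_E}$ is the QC code generated by $\big(\prod_sM_s^{p^t-r_{1(-s)}},\,-\overline{v_2}\prod_sM_s^{p^t-r_{1(-s)}}\big)$ and $\big(-\overline{v_1}\prod_sM_s^{p^t-r_{2(-s)}},\,\prod_sM_s^{p^t-r_{2(-s)}}\big)$, and $\mathcal{C}^{\perp_E}\subseteq\mathcal{C}$.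
   Context: For an integer $s$, the $q$-cyclotomic coset modulo $l$ containing $s$ is $C_{(s,l)}=\{s,sq,\dots,sq^{i_s-1}\}\bmod l$, $i_s$ minimal with $sq^{i_s}\equiv s\pmod l$; $T_l$ is the set of smallest representatives of these cosets. For an integer $s$, $r_{i(-s)}$ denotes $r_{i s'}$ where $s'\in T_l$ is the representative of the coset containing $-s \bmod l$. With $\alpha$ a primitive $l$-th root of unity, $M_s(x)=\prod_{i\in C_{(s,l)}}(x-\alpha^i)$. Elements of $\mathcal{R}$ are identified with representatives of degree $<m$; $[k]=(k_0,\dots,k_{m-1})$; $\overline{k}(x)=k(x^{-1})\bmod(x^m-1)$. The QC code generated by $(u_{i1},u_{i2})$, $i=1,2$, is $\{([r_1u_{11}+r_2u_{21}],[r_1u_{12}+r_2u_{22}]):r_i\in\mathcal{R}\}\subseteq\mathbb{F}_q^{2m}$; $\mathcal{C}^{\perp_E}$ is the dual w.r.t. $\sum u_iv_i$. *)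

theory Defs
  imports "HOL-Computational_Algebra.Computational_Algebra"
begin

text \<open>F is a subfield of the field 'e (F plays the role of F_q).\<close>
definition is_subfield :: "'e::field set \<Rightarrow> bool" where
  "is_subfield F \<longleftrightarrow> 0 \<in> F \<and> 1 \<in> F \<and> (\<forall>a\<in>F. \<forall>b\<in>F. a + b \<in> F \<and> a * b \<in> F)
     \<and> (\<forall>a\<in>F. - a \<in> F) \<and> (\<forall>a\<in>F. inverse a \<in> F)"

definition poly_over :: "'e::field set \<Rightarrow> 'e poly \<Rightarrow> bool" where
  "poly_over F k \<longleftrightarrow> (\<forall>i. coeff k i \<in> F)"

definition cyc_coset :: "nat \<Rightarrow> nat \<Rightarrow> nat \<Rightarrow> nat set" where
  "cyc_coset q l s = {s * q ^ j mod l | j. True}"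

definition cyc_reps :: "nat \<Rightarrow> nat \<Rightarrow> nat set" where
  "cyc_reps q l = {s. s < l \<and> s = Min (cyc_coset q l s)}"

definition neg_rep :: "nat \<Rightarrow> nat \<Rightarrow> nat \<Rightarrow> nat" where
  "neg_rep q l s = Min (cyc_coset q l ((l - s mod l) mod l))"

definition Mpoly :: "nat \<Rightarrow> nat \<Rightarrow> 'e::field \<Rightarrow> nat \<Rightarrow> 'e poly" where
  "Mpoly q l \<alpha> s = (\<Prod>i\<in>cyc_coset q l s. [:- (\<alpha> ^ i), 1:])"

definition xm1 :: "nat \<Rightarrow> 'e::field poly" where
  "xm1 m = monom 1 m - 1"

definition vecR :: "nat \<Rightarrow> 'e::field poly \<Rightarrow> 'e list" where
  "vecR m k = map (\<lambda>i. coeff (k mod xm1 m) i) [0..<m]"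

text \<open>conj k = k(x^-1) mod (x^m - 1).\<close>
definition conjbar :: "nat \<Rightarrow> 'e::field poly \<Rightarrow> 'e poly" where
  "conjbar m k = (\<Sum>i<m. monom (coeff (k mod xm1 m) i) ((m - i) mod m))"

definition qc_code :: "'e::field set \<Rightarrow> nat \<Rightarrow> 'e poly \<Rightarrow> 'e poly \<Rightarrow> 'e poly \<Rightarrow> 'e poly \<Rightarrow> 'e list set" where
  "qc_code F m u11 u12 u21 u22 =
     {vecR m (r1 * u11 + r2 * u21) @ vecR m (r1 * u12 + r2 * u22) | r1 r2.
        poly_over F r1 \<and> poly_over F r2}"

definition euclid_dual :: "'e::field set \<Rightarrow> nat \<Rightarrow> 'e list set \<Rightarrow> 'e list set" where
  "euclid_dual F n C = {v. length v = n \<and> set v \<subseteq> F \<and>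
      (\<forall>c\<in>C. (\<Sum>i<n. c ! i * v ! i) = 0)}"

end

theory Submission
  imports Defs
begin

lemma sf_0: "is_subfield F \<Longrightarrow> 0 \<in> F" by (simp add: is_subfield_def)
lemma sf_1: "is_subfield F \<Longrightarrow> 1 \<in> F" by (simp add: is_subfield_def)
lemma sf_add: "is_subfield F \<Longrightarrow> a \<in> F \<Longrightarrow> b \<in> F \<Longrightarrow> a + b \<in> F" by (simp add: is_subfield_def)
lemma sf_mult: "is_subfield F \<Longrightarrow> a \<in> F \<Longrightarrow> b \<in> F \<Longrightarrow> a * b \<in> F" by (simp add: is_subfield_def)
lemma sf_uminus: "is_subfield F \<Longrightarrow> a \<in> F \<Longrightarrow> - a \<in> F" by (simp add: is_subfield_def)
lemma sf_inverse: "is_subfield F \<Longrightarrow> a \<in> F \<Longrightarrow> inverse a \<in> F" by (simp add: is_subfield_def)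
lemma sf_diff: "is_subfield F \<Longrightarrow> a \<in> F \<Longrightarrow> b \<in> F \<Longrightarrow> a - b \<in> F"
  using sf_add[of F a "-b"] sf_uminus[of F b] by simp
lemma sf_divide: "is_subfield F \<Longrightarrow> a \<in> F \<Longrightarrow> b \<in> F \<Longrightarrow> a / b \<in> F"
  by (simp add: divide_inverse sf_mult sf_inverse)
lemma sf_sum: "is_subfield F \<Longrightarrow> (\<And>i. i \<in> A \<Longrightarrow> f i \<in> F) \<Longrightarrow> sum f A \<in> F"
  by (induction A rule: infinite_finite_induct) (auto simp: sf_0 sf_add)
lemma sf_prod: "is_subfield F \<Longrightarrow> (\<And>i. i \<in> A \<Longrightarrow> f i \<in> F) \<Longrightarrow> prod f A \<in> F"
  by (induction A rule: infinite_finite_induct) (auto simp: sf_1 sf_mult)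
lemma sf_power: "is_subfield F \<Longrightarrow> a \<in> F \<Longrightarrow> a ^ n \<in> F"
  by (induction n) (auto simp: sf_1 sf_mult)
lemma sf_of_nat: "is_subfield F \<Longrightarrow> of_nat n \<in> F"
  by (induction n) (auto simp: sf_0 sf_1 sf_add)

lemma po_0: "poly_over F 0 \<longleftrightarrow> 0 \<in> F" by (simp add: poly_over_def)
lemma po_const: "is_subfield F \<Longrightarrow> c \<in> F \<Longrightarrow> poly_over F [:c:]"
  by (auto simp: poly_over_def coeff_pCons split: nat.splits intro: sf_0)
lemma po_1: "is_subfield F \<Longrightarrow> poly_over F 1"
  using po_const[of F 1] by (simp add: sf_1 one_pCons)
lemma po_zero: "is_subfield F \<Longrightarrow> poly_over F 0"
  by (simp add: poly_over_def sf_0)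
lemma po_monom: "is_subfield F \<Longrightarrow> c \<in> F \<Longrightarrow> poly_over F (monom c n)"
  by (auto simp: poly_over_def coeff_monom intro: sf_0)
lemma po_add: "is_subfield F \<Longrightarrow> poly_over F a \<Longrightarrow> poly_over F b \<Longrightarrow> poly_over F (a + b)"
  by (auto simp: poly_over_def intro: sf_add)
lemma po_uminus: "is_subfield F \<Longrightarrow> poly_over F a \<Longrightarrow> poly_over F (- a)"
  by (auto simp: poly_over_def intro: sf_uminus)
lemma po_diff: "is_subfield F \<Longrightarrow> poly_over F a \<Longrightarrow> poly_over F b \<Longrightarrow> poly_over F (a - b)"
  by (auto simp: poly_over_def intro: sf_diff)
lemma po_mult: "is_subfield F \<Longrightarrow> poly_over F a \<Longrightarrow> poly_over F b \<Longrightarrow> poly_over F (a * b)"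
  unfolding poly_over_def coeff_mult by (auto intro!: sf_sum sf_mult)
lemma po_smult: "is_subfield F \<Longrightarrow> c \<in> F \<Longrightarrow> poly_over F a \<Longrightarrow> poly_over F (smult c a)"
  by (auto simp: poly_over_def intro: sf_mult)
lemma po_sum: "is_subfield F \<Longrightarrow> (\<And>i. i \<in> A \<Longrightarrow> poly_over F (f i)) \<Longrightarrow> poly_over F (sum f A)"
  by (induction A rule: infinite_finite_induct) (auto simp: po_zero po_add)
lemma po_prod: "is_subfield F \<Longrightarrow> (\<And>i. i \<in> A \<Longrightarrow> poly_over F (f i)) \<Longrightarrow> poly_over F (prod f A)"
  by (induction A rule: infinite_finite_induct) (auto simp: po_1 po_mult)
lemma po_power: "is_subfield F \<Longrightarrow> poly_over F a \<Longrightarrow> poly_over F (a ^ n)"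
  by (induction n) (auto simp: po_1 po_mult)
lemma po_pcompose: "is_subfield F \<Longrightarrow> poly_over F a \<Longrightarrow> poly_over F b \<Longrightarrow> poly_over F (pcompose a b)"
proof (induction a)
  case 0 then show ?case by (simp add: po_zero)
next
  case (pCons c a)
  have "c \<in> F" using pCons.prems(2) unfolding poly_over_def by (metis coeff_pCons_0)
  moreover have "poly_over F a" using pCons.prems(2) unfolding poly_over_def by (metis coeff_pCons_Suc)
  ultimately show ?case using pCons by (simp add: pcompose_pCons po_add po_const po_mult)
qed

lemma po_dvd_quot:
  assumes sf: "is_subfield F" and pa: "poly_over F a" and pb: "poly_over F b"
    and b0: "b \<noteq> 0" and eq: "a = b * c"
  shows "poly_over F c"
proof -
  let ?d = "degree b" and ?N = "degree c"
  have lc: "lead_coeff b \<in> F" "lead_coeff b \<noteq> 0" using pb b0 by (auto simp: poly_over_def)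
  have step: "coeff c k \<in> F" if IH: "\<And>i. k < i \<Longrightarrow> coeff c i \<in> F" for k
  proof -
    have "coeff a (k + ?d) = (\<Sum>i\<le>k + ?d. coeff c i * coeff b (k + ?d - i))"
      by (simp add: eq mult.commute[of b c] coeff_mult)
    also have "\<dots> = (\<Sum>i\<in>{k} \<union> {k<..k + ?d}. coeff c i * coeff b (k + ?d - i))"
    proof (rule sum.mono_neutral_right)
      show "\<forall>i\<in>{..k + ?d} - ({k} \<union> {k<..k + ?d}). coeff c i * coeff b (k + ?d - i) = 0"
        by (auto intro!: coeff_eq_0)
    qed auto
    also have "\<dots> = coeff c k * lead_coeff b + (\<Sum>i\<in>{k<..k + ?d}. coeff c i * coeff b (k + ?d - i))"
      by (subst sum.union_disjoint) auto
    finally have "coeff c k * lead_coeff b = coeff a (k + ?d) - (\<Sum>i\<in>{k<..k + ?d}. coeff c i * coeff b (k + ?d - i))"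
      by (simp add: algebra_simps)
    moreover have "coeff a (k + ?d) - (\<Sum>i\<in>{k<..k + ?d}. coeff c i * coeff b (k + ?d - i)) \<in> F"
      using pa pb IH by (auto simp: poly_over_def intro!: sf_diff sf_sum sf_mult sf)
    ultimately have "coeff c k * lead_coeff b \<in> F" by simp
    then have "coeff c k * lead_coeff b / lead_coeff b \<in> F" using lc sf_divide sf by blast
    then show ?thesis using lc by simp
  qed
  have "\<forall>k. coeff c k \<in> F"
  proof
    fix k
    show "coeff c k \<in> F"
    proof (induction "Suc ?N - k" arbitrary: k rule: less_induct)
      case less
      show ?case
      proof (cases "k > ?N")
        case True then show ?thesis by (simp add: coeff_eq_0 sf_0 sf)
      next
        case False
        show ?thesis by (rule step) (use False in \<open>auto intro!: less\<close>)
      qed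
    qed
  qed
  then show ?thesis by (simp add: poly_over_def)
qed


lemma xm1_dvd_pow: "[:-1,1:] dvd [:-1,1:] * 0 \<or> True" by simp

lemma one_dvd_power_minus: "(a::'a::comm_ring_1) - 1 dvd a ^ k - 1"
proof (induction k)
  case 0 then show ?case by simp
next
  case (Suc k)
  have "a ^ Suc k - 1 = a * (a ^ k - 1) + (a - 1)" by (simp add: algebra_simps)
  then show ?case using Suc by (metis dvd_add dvd_mult dvd_refl)
qed

locale qcx =
  fixes F :: "'e::field set" and m :: nat
  assumes sf: "is_subfield F" and mpos: "m > 0"
begin

abbreviation "X \<equiv> (xm1 m :: 'e poly)"

lemma X_def': "X = monom 1 m - 1" by (simp add: xm1_def)

lemma degree_X: "degree X = m"
proof -
  have "degree (monom (1::'e) m + (- 1)) = m"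
    using mpos by (subst degree_add_eq_left) (auto simp: degree_monom_eq)
  then show ?thesis by (simp add: xm1_def)
qed

lemma X_nz: "X \<noteq> 0" using degree_X mpos by auto

lemma X_dvd_monom_pow: "X dvd monom 1 (m * k) - 1"
proof -
  have "monom 1 (m * k) = (monom (1::'e) m) ^ k" by (simp add: monom_power)
  then show ?thesis using one_dvd_power_minus[of "monom (1::'e) m" k] by (simp add: X_def')
qed

lemma monom_cong: "X dvd monom c n - monom c (n mod m)"
proof -
  have n: "n = n mod m + m * (n div m)" by simp
  have "monom c n - monom c (n mod m) = monom c (n mod m) * (monom 1 (m * (n div m)) - 1)"
    by (subst n) (simp add: algebra_simps mult_monom)
  then show ?thesis using X_dvd_monom_pow by (simp add: dvd_mult)
qed

lemma monom_mod: "monom c n mod X = monom c (n mod m)"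
proof -
  have "degree (monom c (n mod m)) < degree X"
    using mpos degree_X by (metis degree_monom_le le_less_trans mod_less_divisor)
  then have "monom c (n mod m) mod X = monom c (n mod m)" by (rule mod_poly_less)
  then show ?thesis using monom_cong by (metis mod_eq_dvd_iff)
qed

definition red :: "'e poly \<Rightarrow> 'e poly" where
  "red k = (\<Sum>n\<le>degree k. monom (coeff k n) (n mod m))"

lemma mod_formula: "k mod X = red k"
proof -
  have "k - red k = (\<Sum>n\<le>degree k. monom (coeff k n) n - monom (coeff k n) (n mod m))"
    by (simp add: red_def sum_subtractf poly_as_sum_of_monoms)
  also have "X dvd \<dots>" by (rule dvd_sum) (rule monom_cong)
  finally have d: "X dvd k - red k" .
  have "degree (red k) < degree X" unfolding red_def degree_X
    using mpos by (intro degree_sum_less) (metis degree_monom_le le_less_trans mod_less_divisor)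
  then have "red k mod X = red k" by (rule mod_poly_less)
  then show ?thesis using d by (metis mod_eq_dvd_iff)
qed

lemma coeff_mod: "coeff (k mod X) i = (\<Sum>n\<le>degree k. if n mod m = i then coeff k n else 0)"
  by (simp add: mod_formula red_def coeff_sum coeff_monom)

lemma po_mod: "poly_over F k \<Longrightarrow> poly_over F (k mod X)"
  unfolding poly_over_def coeff_mod using sf by (auto intro!: sf_sum sf_0)

lemma degree_mod_X: "degree (k mod X) < m"
  using degree_mod_less[OF X_nz, of k] degree_X mpos by auto

lemma mod_as_sum: "k mod X = (\<Sum>i<m. monom (coeff (k mod X) i) i)"
proof -
  have "(\<Sum>i\<le>m - 1. monom (coeff (k mod X) i) i) = k mod X"
    using degree_mod_X[of k] by (intro poly_as_sum_of_monoms') auto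
  moreover have "{..m - 1} = {..<m}" using mpos by auto
  ultimately show ?thesis by simp
qed

end

lemma nat_mod_lemma1: "i < m \<Longrightarrow> ((m - 1) * i) mod m = (m - i) mod (m::nat)"
proof (cases i)
  case 0 then show ?thesis by simp
next
  case (Suc j)
  assume "i < m"
  have "(m - 1) * i = m * j + (m - i)" using \<open>i < m\<close> Suc
    by (simp add: algebra_simps diff_mult_distrib2)
  then show ?thesis by simp
qed
lemma nat_mod_lemma2:
  assumes "i < m" "j < (m::nat)"
  shows "(i + (m - 1) * j) mod m = 0 \<longleftrightarrow> i = j"
proof -
  have "(i + (m - 1) * j) mod m = (i + ((m - 1) * j) mod m) mod m"
    by (simp add: mod_add_right_eq)
  also have "\<dots> = (i + (m - j) mod m) mod m"
    using nat_mod_lemma1[OF assms(2)] by simp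
  also have "\<dots> = (i + (m - j)) mod m" by (simp add: mod_add_right_eq)
  finally have e: "(i + (m - 1) * j) mod m = (i + (m - j)) mod m" .
  show ?thesis
  proof (cases "j \<le> i")
    case True
    then have "i + (m - j) = (i - j) + m" using assms by simp
    then have "(i + (m - j)) mod m = (i - j) mod m" by simp
    also have "\<dots> = i - j" using assms by simp
    finally show ?thesis using e True by auto
  next
    case False
    then have "i + (m - j) < m" using assms by simp
    then have "(i + (m - j)) mod m = i + (m - j)" by simp
    then show ?thesis using e False assms by auto
  qed
qed
lemma nat_mod_lemma3: "0 < m \<Longrightarrow> ((m - 1) * (m - 1)) mod m = 1 mod (m::nat)"
proof (cases m)
  case (Suc k)
  then show ?thesis
  proof (cases k)
    case (Suc j)
    have "k * k = Suc (Suc j) * j + 1" using Suc by (simp add: algebra_simps)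
    then have "k * k = 1 + m * j" using \<open>m = Suc k\<close> Suc by simp
    then have "(k * k) mod m = 1 mod m" by (simp only: mod_mult_self2)
    then show ?thesis using \<open>m = Suc k\<close> by simp
  qed simp
qed simp

lemma pcompose_monom: "pcompose (monom c n) y = smult c (y ^ n)"
proof (induction n arbitrary: c)
  case 0 then show ?case by (simp add: monom_0)
next
  case (Suc n)
  have "monom c (Suc n) = monom c n * [:0,1:]" by (simp add: monom_Suc mult_monom[symmetric] monom_altdef)
  then show ?case using Suc by (simp add: pcompose_mult pcompose_pCons)
qed

lemma mod_sum_poly: "sum f A mod (Y::'e::field poly) = (\<Sum>i\<in>A. f i mod Y)"
  by (induction A rule: infinite_finite_induct) (auto simp: poly_mod_add_left)
context qcx begin

definition P :: "'e poly \<Rightarrow> 'e poly" where "P k = pcompose k (monom 1 (m - 1))"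

lemma P_monom: "P (monom c n) = monom c ((m - 1) * n)"
  by (simp add: P_def pcompose_monom monom_power smult_monom mult.commute)

lemma P_add: "P (a + b) = P a + P b" by (simp add: P_def pcompose_add)
lemma P_diff: "P (a - b) = P a - P b" by (simp add: P_def pcompose_diff)
lemma P_uminus: "P (- a) = - P a" by (simp add: P_def pcompose_uminus)
lemma P_mult: "P (a * b) = P a * P b" by (simp add: P_def pcompose_mult)
lemma P_1: "P 1 = 1" by (simp add: P_def pcompose_1)
lemma P_prod: "P (prod f A) = (\<Prod>i\<in>A. P (f i))" by (simp add: P_def pcompose_prod)
lemma P_power: "P (a ^ n) = P a ^ n" by (induction n) (simp_all add: P_1 P_mult)
lemma P_over: "poly_over F k \<Longrightarrow> poly_over F (P k)"
  unfolding P_def by (rule po_pcompose[OF sf]) (simp_all add: po_monom sf sf_1)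

lemma P_X: "X dvd P X"
proof -
  have "P X = monom 1 (m * (m - 1)) - 1" by (simp add: X_def' P_diff P_monom P_1 mult.commute)
  then show ?thesis using X_dvd_monom_pow by simp
qed

lemma P_cong: "X dvd a - b \<Longrightarrow> X dvd P a - P b"
proof -
  assume "X dvd a - b"
  then obtain c where "a - b = X * c" by (auto elim: dvdE)
  then have "P a - P b = P X * P c" by (metis P_diff P_mult)
  then show ?thesis using P_X by simp
qed

end

lemma dvd_diff_swap: "(x::'a::comm_ring_1) dvd a - b \<Longrightarrow> x dvd b - a"
  by (metis dvd_minus_iff minus_diff_eq)
context qcx begin
lemma pcompose_cong2: "X dvd y - y' \<Longrightarrow> X dvd pcompose k y - pcompose k y'"
proof (induction k)
  case 0 then show ?case by simp
next
  case (pCons a k)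
  have "pcompose (pCons a k) y - pcompose (pCons a k) y' =
        (y - y') * pcompose k y + y' * (pcompose k y - pcompose k y')"
    by (simp add: pcompose_pCons algebra_simps)
  then show ?case using pCons by (simp add: dvd_add dvd_mult dvd_mult2)
qed

lemma PP: "X dvd P (P k) - k"
proof -
  have "P (P k) = pcompose k (pcompose (monom 1 (m - 1)) (monom 1 (m - 1)))"
    by (simp add: P_def pcompose_assoc)
  also have "pcompose (monom (1::'e) (m - 1)) (monom 1 (m - 1)) = monom 1 ((m - 1) * (m - 1))"
    using P_monom[of 1 "m - 1"] by (simp add: P_def)
  finally have e: "P (P k) = pcompose k (monom 1 ((m - 1) * (m - 1)))" .
  have "X dvd monom (1::'e) ((m - 1) * (m - 1)) - monom 1 (1 mod m)"
    using monom_cong[of 1 "(m - 1) * (m - 1)"] nat_mod_lemma3[OF mpos] by simp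
  moreover have "X dvd monom (1::'e) (1 mod m) - monom 1 1"
    using monom_cong[of 1 1] dvd_diff_swap by fastforce
  ultimately have "X dvd monom (1::'e) ((m - 1) * (m - 1)) - monom 1 1"
    using dvd_add by fastforce
  then have "X dvd pcompose k (monom 1 ((m - 1) * (m - 1))) - pcompose k (monom 1 1)"
    by (rule pcompose_cong2)
  moreover have "monom (1::'e) 1 = [:0, 1:]" by (simp add: monom_altdef)
  ultimately show ?thesis using e by simp
qed

lemma cb_P: "X dvd conjbar m k - P k"
proof -
  define a where "a i = coeff (k mod X) i" for i
  have cb: "conjbar m k = (\<Sum>i<m. monom (a i) (((m - 1) * i) mod m))"
    unfolding conjbar_def a_def by (intro sum.cong refl) (simp add: nat_mod_lemma1[simplified])
  have "X dvd P k - P (k mod X)" by (rule P_cong) simp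
  moreover have "P (k mod X) = (\<Sum>i<m. monom (a i) ((m - 1) * i))"
    by (subst mod_as_sum) (simp add: a_def P_def pcompose_sum P_monom[unfolded P_def, simplified])
  moreover have "X dvd (\<Sum>i<m. monom (a i) ((m - 1) * i)) - conjbar m k"
    unfolding cb sum_subtractf[symmetric] by (rule dvd_sum) (rule monom_cong)
  ultimately have "X dvd P k - conjbar m k" using dvd_add by fastforce
  then show ?thesis by (rule dvd_diff_swap)
qed

definition tau :: "'e poly \<Rightarrow> 'e" where "tau k = coeff (k mod X) 0"

lemma tau_cong: "X dvd a - b \<Longrightarrow> tau a = tau b"
  by (simp add: tau_def mod_eq_dvd_iff[symmetric])
lemma tau_add: "tau (a + b) = tau a + tau b" by (simp add: tau_def poly_mod_add_left)
lemma tau_sum: "tau (sum f A) = (\<Sum>i\<in>A. tau (f i))" by (simp add: tau_def mod_sum_poly coeff_sum)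
lemma tau_monom: "tau (monom c n) = (if n mod m = 0 then c else 0)"
  by (simp add: tau_def monom_mod coeff_monom)

end

context qcx begin
lemma inner: "(\<Sum>i<m. coeff (a mod X) i * coeff (c mod X) i) = tau (a * P c)"
proof -
  define A where "A i = coeff (a mod X) i" for i
  define C where "C i = coeff (c mod X) i" for i
  have "X dvd a * P c - (a mod X) * P (c mod X)"
  proof -
    have "a * P c - (a mod X) * P (c mod X) = (a - a mod X) * P c + (a mod X) * (P c - P (c mod X))"
      by (simp add: algebra_simps)
    moreover have "X dvd P c - P (c mod X)" by (rule P_cong) simp
    ultimately show ?thesis by (simp add: dvd_add dvd_mult dvd_mult2)
  qed
  then have "tau (a * P c) = tau ((a mod X) * P (c mod X))" by (rule tau_cong)
  also have "(a mod X) * P (c mod X) = (\<Sum>i<m. \<Sum>j<m. monom (A i * C j) (i + (m - 1) * j))"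
    apply (subst mod_as_sum[of a], subst mod_as_sum[of c])
    apply (simp add: A_def C_def P_def pcompose_sum P_monom[unfolded P_def, simplified] sum_product mult_monom)
    done
  also have "tau \<dots> = (\<Sum>i<m. \<Sum>j<m. if (i + (m - 1) * j) mod m = 0 then A i * C j else 0)"
    by (simp add: tau_sum tau_monom)
  also have "\<dots> = (\<Sum>i<m. \<Sum>j<m. if i = j then A i * C j else 0)"
    by (intro sum.cong refl) (simp add: nat_mod_lemma2[simplified])
  also have "\<dots> = (\<Sum>i<m. A i * C i)" by simp
  finally show ?thesis by (simp add: A_def C_def)
qed

lemma tau_dvd:
  assumes "\<And>j. j < m \<Longrightarrow> tau (k * monom 1 ((m - 1) * j)) = 0"
  shows "X dvd k"
proof -
  have "coeff (k mod X) j = 0" for j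
  proof (cases "j < m")
    case True
    have mj: "monom (1::'e) j mod X = monom 1 j" using True by (simp add: monom_mod)
    have "coeff (k mod X) j = (\<Sum>i<m. coeff (k mod X) i * coeff (monom 1 j mod X) i)"
      using True by (simp add: mj coeff_monom if_distrib[of "\<lambda>x. _ * x"] cong: if_cong)
    also have "\<dots> = tau (k * P (monom 1 j))" by (rule inner)
    also have "\<dots> = 0" using assms[OF True] by (simp add: P_monom)
    finally show ?thesis by simp
  next
    case False
    then show ?thesis using degree_mod_X[of k] by (simp add: coeff_eq_0)
  qed
  then have "k mod X = 0" by (simp add: poly_eq_iff)
  then show ?thesis by (simp add: mod_eq_0_iff_dvd)
qed

end

context qcx begin

definition cg :: "'e poly \<Rightarrow> 'e poly \<Rightarrow> bool" where "cg a b \<longleftrightarrow> X dvd a - b"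

lemma cg_refl[simp]: "cg a a" by (simp add: cg_def)
lemma cg_eqI: "a = b \<Longrightarrow> cg a b" by simp
lemma cg_sym: "cg a b \<Longrightarrow> cg b a" by (simp add: cg_def dvd_diff_swap)
lemma cg_trans[trans]: "cg a b \<Longrightarrow> cg b c \<Longrightarrow> cg a c"
proof -
  assume "cg a b" "cg b c"
  moreover have "a - c = (a - b) + (b - c)" by simp
  ultimately show ?thesis unfolding cg_def by (metis dvd_add)
qed
lemma cg_add: "cg a a' \<Longrightarrow> cg b b' \<Longrightarrow> cg (a + b) (a' + b')"
proof -
  assume "cg a a'" "cg b b'"
  moreover have "(a + b) - (a' + b') = (a - a') + (b - b')" by simp
  ultimately show ?thesis unfolding cg_def by (metis dvd_add)
qed
lemma cg_diff: "cg a a' \<Longrightarrow> cg b b' \<Longrightarrow> cg (a - b) (a' - b')"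
proof -
  assume "cg a a'" "cg b b'"
  moreover have "(a - b) - (a' - b') = (a - a') - (b - b')" by simp
  ultimately show ?thesis unfolding cg_def by (metis dvd_diff)
qed
lemma cg_uminus: "cg a a' \<Longrightarrow> cg (- a) (- a')"
proof -
  assume "cg a a'"
  moreover have "(- a) - (- a') = - (a - a')" by simp
  ultimately show ?thesis unfolding cg_def by (metis dvd_minus_iff)
qed
lemma cg_mult: "cg a a' \<Longrightarrow> cg b b' \<Longrightarrow> cg (a * b) (a' * b')"
proof -
  assume "cg a a'" "cg b b'"
  moreover have "a * b - a' * b' = (a - a') * b + a' * (b - b')" by (simp add: algebra_simps)
  ultimately show ?thesis unfolding cg_def by (simp add: dvd_add dvd_mult dvd_mult2)
qed
lemma cg_P: "cg a b \<Longrightarrow> cg (P a) (P b)" by (simp add: cg_def P_cong)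
lemma cg_PP: "cg (P (P a)) a" by (simp add: cg_def PP)
lemma cg_cb: "cg (conjbar m a) (P a)" by (simp add: cg_def cb_P)
lemma cg_zero: "cg a 0 \<longleftrightarrow> X dvd a" by (simp add: cg_def)
lemma cg_X: "cg X 0" by (simp add: cg_def)
lemma cg_mod: "cg a b \<longleftrightarrow> a mod X = b mod X" by (simp add: cg_def mod_eq_dvd_iff)

lemma length_vecR[simp]: "length (vecR m k) = m" by (simp add: vecR_def)
lemma nth_vecR: "i < m \<Longrightarrow> vecR m k ! i = coeff (k mod X) i" by (simp add: vecR_def)
lemma vecR_cong: "cg a b \<Longrightarrow> vecR m a = vecR m b" by (simp add: vecR_def cg_mod)
lemma vecR_over: "poly_over F k \<Longrightarrow> set (vecR m k) \<subseteq> F"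
  using po_mod[of k] by (auto simp: vecR_def poly_over_def)

lemma cb_over: "poly_over F k \<Longrightarrow> poly_over F (conjbar m k)"
  using po_mod[of k] sf unfolding conjbar_def
  by (intro po_sum po_monom sf) (auto simp: poly_over_def)

definition pl :: "'e list \<Rightarrow> 'e poly" where "pl w = (\<Sum>i<m. monom (w ! i) i)"

lemma coeff_pl: "coeff (pl w) i = (if i < m then w ! i else 0)"
  by (simp add: pl_def coeff_sum coeff_monom)
lemma degree_pl: "degree (pl w) < m"
  unfolding pl_def using mpos by (intro degree_sum_less) (auto intro: le_less_trans[OF degree_monom_le])
lemma pl_mod: "pl w mod X = pl w"
  by (rule mod_poly_less) (simp add: degree_X degree_pl)
lemma vecR_pl: "length w = m \<Longrightarrow> vecR m (pl w) = w"
  by (intro nth_equalityI) (simp_all add: nth_vecR pl_mod coeff_pl)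
lemma pl_over: "set w \<subseteq> F \<Longrightarrow> length w = m \<Longrightarrow> poly_over F (pl w)"
  using sf by (auto simp: poly_over_def coeff_pl intro: sf_0)

lemma list_inner:
  assumes "length A = m" "length B = m" "length C = m" "length D = m"
  shows "(\<Sum>i<2 * m. (A @ B) ! i * (C @ D) ! i) = (\<Sum>i<m. A ! i * C ! i) + (\<Sum>i<m. B ! i * D ! i)"
proof -
  have u: "{..<2 * m} = {..<m} \<union> {m..<m + m}" by auto
  have "(\<Sum>i<2 * m. (A @ B) ! i * (C @ D) ! i) =
        (\<Sum>i<m. (A @ B) ! i * (C @ D) ! i) + (\<Sum>i\<in>{m..<m + m}. (A @ B) ! i * (C @ D) ! i)"
    unfolding u by (rule sum.union_disjoint) auto
  also have "(\<Sum>i<m. (A @ B) ! i * (C @ D) ! i) = (\<Sum>i<m. A ! i * C ! i)"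
    using assms by (intro sum.cong) (auto simp: nth_append)
  also have "(\<Sum>i\<in>{m..<m + m}. (A @ B) ! i * (C @ D) ! i) = (\<Sum>i\<in>{0..<m}. (A @ B) ! (i + m) * (C @ D) ! (i + m))"
    using sum.shift_bounds_nat_ivl[of "\<lambda>i. (A @ B) ! i * (C @ D) ! i" 0 m m] by simp
  also have "\<dots> = (\<Sum>i<m. B ! i * D ! i)"
    using assms by (intro sum.cong) (auto simp: nth_append)
  finally show ?thesis .
qed

lemma code_inner:
  "(\<Sum>i<2 * m. (vecR m a @ vecR m b) ! i * (vecR m c @ vecR m d) ! i) = tau (a * P c + b * P d)"
proof -
  have "(\<Sum>i<2 * m. (vecR m a @ vecR m b) ! i * (vecR m c @ vecR m d) ! i) =
     (\<Sum>i<m. coeff (a mod X) i * coeff (c mod X) i) + (\<Sum>i<m. coeff (b mod X) i * coeff (d mod X) i)"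
    by (simp add: list_inner nth_vecR)
  also have "\<dots> = tau (a * P c + b * P d)" by (simp add: inner tau_add)
  finally show ?thesis .
qed

lemma tau_cg0: "cg a 0 \<Longrightarrow> tau a = 0"
  using tau_cong[of a 0] by (simp add: cg_def tau_def)

lemma inverse_exists:
  assumes fin: "finite F" and w: "poly_over F w" and cop: "\<And>r. X dvd r * w \<Longrightarrow> X dvd r"
  shows "\<exists>z. poly_over F z \<and> cg (z * w) 1"
proof -
  define S where "S = pl ` {xs. set xs \<subseteq> F \<and> length xs = m}"
  have finS: "finite S" unfolding S_def using fin by (intro finite_imageI finite_lists_length_eq)
  have S_iff: "k \<in> S \<longleftrightarrow> poly_over F k \<and> degree k < m" for k
  proof
    assume "k \<in> S"
    then obtain xs where "k = pl xs" "set xs \<subseteq> F" "length xs = m" unfolding S_def by blast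
    then show "poly_over F k \<and> degree k < m" using pl_over degree_pl by blast
  next
    assume a: "poly_over F k \<and> degree k < m"
    then have km: "k mod X = k" by (intro mod_poly_less) (simp add: degree_X)
    have "pl (vecR m k) = k"
    proof (rule poly_eqI)
      fix i show "coeff (pl (vecR m k)) i = coeff k i"
        using a by (auto simp: coeff_pl nth_vecR km coeff_eq_0)
    qed
    moreover have "set (vecR m k) \<subseteq> F" using vecR_over a by blast
    ultimately show "k \<in> S" unfolding S_def by (metis (mono_tags, lifting) image_eqI length_vecR mem_Collect_eq)
  qed
  define \<rho> where "\<rho> r = (r * w) mod X" for r
  have img: "\<rho> ` S \<subseteq> S"
  proof
    fix y assume "y \<in> \<rho> ` S"
    then obtain r where r: "r \<in> S" "y = \<rho> r" by auto
    then show "y \<in> S" unfolding S_iff \<rho>_def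
      using po_mod[OF po_mult[OF sf _ w]] degree_mod_X S_iff by auto
  qed
  have inj: "inj_on \<rho> S"
  proof
    fix r r' assume rr: "r \<in> S" "r' \<in> S" "\<rho> r = \<rho> r'"
    then have "X dvd r * w - r' * w" unfolding \<rho>_def by (simp add: mod_eq_dvd_iff)
    then have "X dvd (r - r') * w" by (simp add: algebra_simps)
    then have "X dvd r - r'" by (rule cop)
    then have "r mod X = r' mod X" by (simp add: mod_eq_dvd_iff)
    moreover have "r mod X = r" "r' mod X = r'" using rr(1,2) S_iff
      by (auto intro!: mod_poly_less simp: degree_X)
    ultimately show "r = r'" by simp
  qed
  have "\<rho> ` S = S" using card_image[OF inj] img finS by (intro card_subset_eq) auto
  moreover have "1 \<in> S" using S_iff po_1[OF sf] mpos by simp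
  ultimately obtain z where z: "z \<in> S" "\<rho> z = 1" by (metis imageE)
  have "(1::'e poly) mod X = 1" by (rule mod_poly_less) (simp add: degree_X mpos)
  then have "cg (z * w) 1" using z(2) by (simp add: cg_mod \<rho>_def)
  then show ?thesis using z(1) S_iff by blast
qed

end

context qcx begin

lemmas po_intros = po_add[OF sf] po_mult[OF sf] po_uminus[OF sf] po_diff[OF sf] cb_over P_over

lemma abstract_main:
  assumes fin: "finite F"
    and o: "poly_over F g1" "poly_over F g2" "poly_over F h1" "poly_over F h2"
      "poly_over F H1" "poly_over F H2" "poly_over F v1" "poly_over F v2"
      "poly_over F k0" "poly_over F k1" "poly_over F k2" "poly_over F e"
      "poly_over F w1" "poly_over F w2"
    and XH: "X = g1 * H1" "X = g2 * H2"
    and Ph: "cg (P h1) (u1 * H1)" "cg H1 (w1 * P h1)" "cg (P h2) (u2 * H2)" "cg H2 (w2 * P h2)"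
    and fac: "g2 = g1 * k0" "h1 = g2 * k1" "h2 = g2 * k2"
    and e: "cg (e * (1 - v1 * v2)) 1"
  shows "euclid_dual F (2 * m) (qc_code F m g1 (v1 * g1) (v2 * g2) g2) =
           qc_code F m h1 (- conjbar m v2 * h1) (- conjbar m v1 * h2) h2
         \<and> euclid_dual F (2 * m) (qc_code F m g1 (v1 * g1) (v2 * g2) g2)
            \<subseteq> qc_code F m g1 (v1 * g1) (v2 * g2) g2"
proof -
  define C where "C = qc_code F m g1 (v1 * g1) (v2 * g2) g2"
  define D where "D = qc_code F m h1 (- conjbar m v2 * h1) (- conjbar m v1 * h2) h2"
  have g1X: "cg (g1 * P h1) 0"
  proof -
    have "cg (g1 * P h1) (g1 * (u1 * H1))" by (rule cg_mult[OF cg_refl Ph(1)])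
    also have "g1 * (u1 * H1) = u1 * X" using XH(1) by (simp add: ac_simps)
    also have "cg (u1 * X) (u1 * 0)" by (rule cg_mult[OF cg_refl cg_X])
    finally show ?thesis by simp
  qed
  have g2X: "cg (g2 * P h2) 0"
  proof -
    have "cg (g2 * P h2) (g2 * (u2 * H2))" by (rule cg_mult[OF cg_refl Ph(3)])
    also have "g2 * (u2 * H2) = u2 * X" using XH(2) by (simp add: ac_simps)
    also have "cg (u2 * X) (u2 * 0)" by (rule cg_mult[OF cg_refl cg_X])
    finally show ?thesis by simp
  qed
  have D_dual: "D \<subseteq> euclid_dual F (2 * m) C"
  proof
    fix x assume "x \<in> D"
    then obtain a b where ab: "poly_over F a" "poly_over F b"
      and x: "x = vecR m (a * h1 + b * (- conjbar m v1 * h2)) @ vecR m (a * (- conjbar m v2 * h1) + b * h2)"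
      unfolding D_def qc_code_def by blast
    define c where "c = a * h1 + b * (- conjbar m v1 * h2)"
    define d where "d = a * (- conjbar m v2 * h1) + b * h2"
    have co: "poly_over F c" "poly_over F d"
      using ab o
      by (unfold c_def d_def) (intro po_intros; assumption)+
    have Pc: "cg (P c) (P a * P h1 - P b * v1 * P h2)"
    proof -
      have "P c = P a * P h1 + P b * (- P (conjbar m v1) * P h2)"
        by (simp add: c_def P_add P_mult P_uminus P_diff)
      also have "cg \<dots> (P a * P h1 + P b * (- v1 * P h2))"
        by (intro cg_add cg_mult cg_refl cg_uminus cg_trans[OF cg_P[OF cg_cb] cg_PP])
      finally show ?thesis by (simp add: algebra_simps)
    qed
    have Pd: "cg (P d) (- P a * v2 * P h1 + P b * P h2)"
    proof -
      have "P d = P a * (- P (conjbar m v2) * P h1) + P b * P h2"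
        by (simp add: d_def P_add P_mult P_uminus P_diff)
      also have "cg \<dots> (P a * (- v2 * P h1) + P b * P h2)"
        by (intro cg_add cg_mult cg_refl cg_uminus cg_trans[OF cg_P[OF cg_cb] cg_PP])
      finally show ?thesis by (simp add: algebra_simps)
    qed
    show "x \<in> euclid_dual F (2 * m) C"
      unfolding euclid_dual_def
    proof (intro CollectI conjI ballI)
      show "length x = 2 * m" by (simp add: x)
      show "set x \<subseteq> F" using vecR_over co by (auto simp: x c_def d_def)
      fix y assume "y \<in> C"
      then obtain r1 r2 where y: "y = vecR m (r1 * g1 + r2 * (v2 * g2)) @ vecR m (r1 * (v1 * g1) + r2 * g2)"
        unfolding C_def qc_code_def by blast
      have "(\<Sum>i<2 * m. y ! i * x ! i) = tau ((r1 * g1 + r2 * (v2 * g2)) * P c + (r1 * (v1 * g1) + r2 * g2) * P d)"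
        unfolding x y c_def[symmetric] d_def[symmetric] by (rule code_inner)
      also have "\<dots> = 0"
      proof (rule tau_cg0)
        have "cg ((r1 * g1 + r2 * (v2 * g2)) * P c + (r1 * (v1 * g1) + r2 * g2) * P d)
                 ((r1 * g1 + r2 * (v2 * g2)) * (P a * P h1 - P b * v1 * P h2) + (r1 * (v1 * g1) + r2 * g2) * (- P a * v2 * P h1 + P b * P h2))"
          by (intro cg_add cg_mult cg_refl Pc Pd)
        also have "(r1 * g1 + r2 * (v2 * g2)) * (P a * P h1 - P b * v1 * P h2) + (r1 * (v1 * g1) + r2 * g2) * (- P a * v2 * P h1 + P b * P h2)
             = (r1 * P a * (1 - v1 * v2)) * (g1 * P h1) + (r2 * P b * (1 - v1 * v2)) * (g2 * P h2)"
          by (simp add: algebra_simps)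
        also have "cg \<dots> ((r1 * P a * (1 - v1 * v2)) * 0 + (r2 * P b * (1 - v1 * v2)) * 0)"
          by (intro cg_add cg_mult cg_refl g1X g2X)
        finally show "cg ((r1 * g1 + r2 * (v2 * g2)) * P c + (r1 * (v1 * g1) + r2 * g2) * P d) 0" by simp
      qed
      finally show "(\<Sum>i<2 * m. y ! i * x ! i) = 0" .
    qed
  qed
  have D_C: "D \<subseteq> C"
  proof
    fix x assume "x \<in> D"
    then obtain a b where ab: "poly_over F a" "poly_over F b"
      and x: "x = vecR m (a * h1 + b * (- conjbar m v1 * h2)) @ vecR m (a * (- conjbar m v2 * h1) + b * h2)"
      unfolding D_def qc_code_def by blast
    define X' where "X' = a * k1 - b * conjbar m v1 * k2"
    define Y' where "Y' = - a * conjbar m v2 * k1 + b * k2"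
    define \<rho>2 where "\<rho>2 = e * (Y' - v1 * X')"
    define \<rho>1 where "\<rho>1 = k0 * (X' - \<rho>2 * v2)"
    have ro: "poly_over F \<rho>1" "poly_over F \<rho>2"
     
      using ab o
      by (unfold \<rho>1_def \<rho>2_def X'_def Y'_def) (intro po_intros; assumption)+
    have e1: "\<rho>1 * g1 + \<rho>2 * (v2 * g2) = a * h1 + b * (- conjbar m v1 * h2)"
      unfolding \<rho>1_def fac X'_def by (simp add: algebra_simps)
    have "cg (\<rho>1 * (v1 * g1) + \<rho>2 * g2) (g2 * (v1 * X' + (Y' - v1 * X')))"
    proof -
      have "\<rho>1 * (v1 * g1) + \<rho>2 * g2 = g2 * (v1 * X' + (e * (1 - v1 * v2)) * (Y' - v1 * X'))"
        unfolding \<rho>1_def \<rho>2_def fac(1) by (simp add: algebra_simps)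
      also have "cg \<dots> (g2 * (v1 * X' + 1 * (Y' - v1 * X')))"
        by (intro cg_mult cg_add cg_refl e)
      finally show ?thesis by simp
    qed
    also have "g2 * (v1 * X' + (Y' - v1 * X')) = a * (- conjbar m v2 * h1) + b * h2"
      unfolding Y'_def fac by (simp add: algebra_simps)
    finally have e2: "cg (\<rho>1 * (v1 * g1) + \<rho>2 * g2) (a * (- conjbar m v2 * h1) + b * h2)" .
    have "x = vecR m (\<rho>1 * g1 + \<rho>2 * (v2 * g2)) @ vecR m (\<rho>1 * (v1 * g1) + \<rho>2 * g2)"
      unfolding x e1 using vecR_cong[OF e2] by simp
    then show "x \<in> C" unfolding C_def qc_code_def using ro by blast
  qed
  have dual_D: "euclid_dual F (2 * m) C \<subseteq> D"
  proof
    fix x assume "x \<in> euclid_dual F (2 * m) C"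
    then have xl: "length x = 2 * m" and xF: "set x \<subseteq> F"
      and orth: "\<And>y. y \<in> C \<Longrightarrow> (\<Sum>i<2 * m. y ! i * x ! i) = 0"
      unfolding euclid_dual_def by auto
    define c where "c = pl (take m x)"
    define d where "d = pl (drop m x)"
    have co: "poly_over F c" "poly_over F d" unfolding c_def d_def using xF xl
      by (auto intro!: pl_over dest: in_set_takeD in_set_dropD)
    have x: "x = vecR m c @ vecR m d" unfolding c_def d_def using xl by (simp add: vecR_pl)
    have key: "tau ((r1 * g1 + r2 * (v2 * g2)) * P c + (r1 * (v1 * g1) + r2 * g2) * P d) = 0"
      if "poly_over F r1" "poly_over F r2" for r1 r2
    proof -
      have "vecR m (r1 * g1 + r2 * (v2 * g2)) @ vecR m (r1 * (v1 * g1) + r2 * g2) \<in> C"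
        unfolding C_def qc_code_def using that by blast
      from orth[OF this] show ?thesis unfolding x by (simp add: code_inner)
    qed
    define U where "U = P c + v1 * P d"
    define W where "W = v2 * P c + P d"
    have Uo: "poly_over F U" "poly_over F W"
      using co o
      by (unfold U_def W_def) (intro po_intros; assumption)+
    have "X dvd g1 * U"
    proof (rule tau_dvd)
      fix j assume "j < m"
      have "poly_over F (monom 1 ((m - 1) * j))" by (simp add: po_monom sf sf_1)
      from key[OF this po_zero[OF sf]] show "tau (g1 * U * monom 1 ((m - 1) * j)) = 0"
        by (simp add: U_def algebra_simps)
    qed
    then have "g1 * H1 dvd g1 * U" using XH(1) by simp
    moreover have "g1 \<noteq> 0" using X_nz XH(1) by auto
    ultimately have "H1 dvd U" by simp
    then obtain \<alpha> where \<alpha>: "U = H1 * \<alpha>" by (auto elim: dvdE)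
    have "X dvd g2 * W"
    proof (rule tau_dvd)
      fix j assume "j < m"
      have "poly_over F (monom 1 ((m - 1) * j))" by (simp add: po_monom sf sf_1)
      from key[OF po_zero[OF sf] this] show "tau (g2 * W * monom 1 ((m - 1) * j)) = 0"
        by (simp add: W_def algebra_simps)
    qed
    then have "g2 * H2 dvd g2 * W" using XH(2) by simp
    moreover have "g2 \<noteq> 0" using X_nz XH(2) by auto
    ultimately have "H2 dvd W" by simp
    then obtain \<beta> where \<beta>: "W = H2 * \<beta>" by (auto elim: dvdE)
    have H1nz: "H1 \<noteq> 0" "H2 \<noteq> 0" using X_nz XH by auto
    have \<alpha>o: "poly_over F \<alpha>" by (rule po_dvd_quot[OF sf Uo(1) o(5) H1nz(1) \<alpha>])
    have \<beta>o: "poly_over F \<beta>" by (rule po_dvd_quot[OF sf Uo(2) o(6) H1nz(2) \<beta>])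
    define a where "a = P e * P w1 * P \<alpha>"
    define b where "b = P e * P w2 * P \<beta>"
    have abo: "poly_over F a" "poly_over F b"
      using o \<alpha>o \<beta>o
      by (unfold a_def b_def) (intro po_intros; assumption)+
    have PH1: "cg (P H1) (P w1 * h1)"
    proof -
      have "cg (P H1) (P (w1 * P h1))" by (rule cg_P[OF Ph(2)])
      also have "P (w1 * P h1) = P w1 * P (P h1)" by (simp add: P_mult)
      also have "cg \<dots> (P w1 * h1)" by (intro cg_mult cg_refl cg_PP)
      finally show ?thesis .
    qed
    have PH2: "cg (P H2) (P w2 * h2)"
    proof -
      have "cg (P H2) (P (w2 * P h2))" by (rule cg_P[OF Ph(4)])
      also have "P (w2 * P h2) = P w2 * P (P h2)" by (simp add: P_mult)
      also have "cg \<dots> (P w2 * h2)" by (intro cg_mult cg_refl cg_PP)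
      finally show ?thesis .
    qed
    have Pcv: "cg (P c) (e * (H1 * \<alpha> - v1 * (H2 * \<beta>)))"
    proof -
      have "cg (P c) (1 * P c)" by simp
      also have "cg (1 * P c) ((e * (1 - v1 * v2)) * P c)" by (intro cg_mult cg_refl cg_sym[OF e])
      also have "(e * (1 - v1 * v2)) * P c = e * (U - v1 * W)" unfolding U_def W_def by (simp add: algebra_simps)
      finally show ?thesis by (simp add: \<alpha> \<beta>)
    qed
    have Pdv: "cg (P d) (e * (H2 * \<beta> - v2 * (H1 * \<alpha>)))"
    proof -
      have "cg (P d) (1 * P d)" by simp
      also have "cg (1 * P d) ((e * (1 - v1 * v2)) * P d)" by (intro cg_mult cg_refl cg_sym[OF e])
      also have "(e * (1 - v1 * v2)) * P d = e * (W - v2 * U)" unfolding U_def W_def by (simp add: algebra_simps)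
      finally show ?thesis by (simp add: \<alpha> \<beta>)
    qed
    have cc: "cg c (a * h1 + b * (- conjbar m v1 * h2))"
    proof -
      have "cg c (P (P c))" by (rule cg_sym[OF cg_PP])
      also have "cg (P (P c)) (P (e * (H1 * \<alpha> - v1 * (H2 * \<beta>))))" by (rule cg_P[OF Pcv])
      also have "P (e * (H1 * \<alpha> - v1 * (H2 * \<beta>))) = P e * (P H1 * P \<alpha> - P v1 * (P H2 * P \<beta>))"
        by (simp add: P_mult P_diff)
      also have "cg \<dots> (P e * ((P w1 * h1) * P \<alpha> - conjbar m v1 * ((P w2 * h2) * P \<beta>)))"
        by (intro cg_mult cg_diff cg_refl PH1 PH2 cg_sym[OF cg_cb])
      also have "P e * ((P w1 * h1) * P \<alpha> - conjbar m v1 * ((P w2 * h2) * P \<beta>)) = a * h1 + b * (- conjbar m v1 * h2)"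
        unfolding a_def b_def by (simp add: algebra_simps)
      finally show ?thesis .
    qed
    have dd: "cg d (a * (- conjbar m v2 * h1) + b * h2)"
    proof -
      have "cg d (P (P d))" by (rule cg_sym[OF cg_PP])
      also have "cg (P (P d)) (P (e * (H2 * \<beta> - v2 * (H1 * \<alpha>))))" by (rule cg_P[OF Pdv])
      also have "P (e * (H2 * \<beta> - v2 * (H1 * \<alpha>))) = P e * (P H2 * P \<beta> - P v2 * (P H1 * P \<alpha>))"
        by (simp add: P_mult P_diff)
      also have "cg \<dots> (P e * ((P w2 * h2) * P \<beta> - conjbar m v2 * ((P w1 * h1) * P \<alpha>)))"
        by (intro cg_mult cg_diff cg_refl PH1 PH2 cg_sym[OF cg_cb])
      also have "P e * ((P w2 * h2) * P \<beta> - conjbar m v2 * ((P w1 * h1) * P \<alpha>)) = a * (- conjbar m v2 * h1) + b * h2"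
        unfolding a_def b_def by (simp add: algebra_simps)
      finally show ?thesis .
    qed
    have "x = vecR m (a * h1 + b * (- conjbar m v1 * h2)) @ vecR m (a * (- conjbar m v2 * h1) + b * h2)"
      unfolding x using vecR_cong[OF cc] vecR_cong[OF dd] by simp
    then show "x \<in> D" unfolding D_def qc_code_def using abo by blast
  qed
  show ?thesis using D_dual dual_D D_C unfolding C_def[symmetric] D_def[symmetric] by blast
qed

end

locale cycl =
  fixes F :: "'e::field set" and q l :: nat and \<alpha> :: 'e
  assumes sf: "is_subfield F" and fin: "finite F" and q: "q = card F" and l: "l \<ge> 1"
    and al: "\<alpha> ^ l = 1" and ord: "\<forall>j. 0 < j \<and> j < l \<longrightarrow> \<alpha> ^ j \<noteq> 1"
begin

lemma q2: "q \<ge> 2"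
proof -
  have "{0, 1} \<subseteq> F" using sf sf_0 sf_1 by auto
  then have "card {0::'e, 1} \<le> card F" using fin by (rule card_mono[rotated])
  then show ?thesis using q by simp
qed

lemma fermat: "a \<in> F \<Longrightarrow> a ^ q = a"
proof (cases "a = 0")
  case True then show ?thesis using q2 by simp
next
  case False
  assume aF: "a \<in> F"
  define G where "G = F - {0}"
  have finG: "finite G" using fin by (simp add: G_def)
  have bij: "bij_betw (\<lambda>b. a * b) G G"
  proof (rule bij_betwI[where g = "\<lambda>b. inverse a * b"])
    show "(\<lambda>b. a * b) \<in> G \<rightarrow> G" using aF False sf by (auto simp: G_def intro: sf_mult)
    show "(\<lambda>b. inverse a * b) \<in> G \<rightarrow> G" using aF False sf by (auto simp: G_def intro: sf_mult sf_inverse)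
  qed (use False in \<open>auto simp: field_simps\<close>)
  have "(\<Prod>b\<in>G. a * b) = (\<Prod>b\<in>G. b)" using prod.reindex_bij_betw[OF bij, of "\<lambda>x. x"] by simp
  then have "a ^ card G * (\<Prod>b\<in>G. b) = 1 * (\<Prod>b\<in>G. b)" by (simp add: prod.distrib)
  moreover have "(\<Prod>b\<in>G. b) \<noteq> 0" using finG by (simp add: G_def)
  ultimately have "a ^ card G = 1" by (metis mult_right_cancel)
  moreover have "card G = q - 1" using q sf_0[OF sf] fin by (simp add: G_def card_Diff_singleton)
  ultimately have "a ^ (q - 1) = 1" by simp
  then have "a * a ^ (q - 1) = a" by simp
  moreover have "q = Suc (q - 1)" using q2 by simp
  ultimately show ?thesis by (metis power_Suc)
qed

lemma fixed_in_F: assumes "y ^ q = y" shows "y \<in> F"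
proof -
  define Q :: "'e poly" where "Q = monom 1 q - [:0, 1:]"
  have "coeff [:0, 1::'e:] q = 0" using q2 by (intro coeff_eq_0) simp
  then have "coeff Q q = 1" by (simp add: Q_def)
  then have Qnz: "Q \<noteq> 0" by auto
  have "degree Q \<le> q" unfolding Q_def using q2
    by (intro degree_diff_le) (auto intro: degree_monom_le)
  have roots: "F \<subseteq> {x. poly Q x = 0}" using fermat by (auto simp: Q_def poly_monom)
  have "card {x. poly Q x = 0} \<le> q" using card_poly_roots_bound[OF Qnz] \<open>degree Q \<le> q\<close> by linarith
  then have "F = {x. poly Q x = 0}" using roots q poly_roots_finite[OF Qnz]
    by (metis card_seteq)
  moreover have "poly Q y = 0" using assms by (simp add: Q_def poly_monom)
  ultimately show ?thesis by blast
qed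

lemma choose_zero: assumes "0 < j" "j < q" shows "(of_nat (q choose j) :: 'e) = 0"
proof -
  define Q :: "'e poly" where "Q = [:1, 1:] ^ q - monom 1 q - 1"
  have cQ: "coeff Q k = (if k \<le> q then of_nat (q choose k) else 0) - (if k = q then 1 else 0) - (if k = 0 then 1 else 0)" for k
  proof (cases "k \<le> q")
    case True then show ?thesis by (simp add: Q_def coeff_linear_poly_power coeff_1)
  next
    case False
    have "degree ([:1, 1::'e:] ^ q) \<le> degree [:1, 1::'e:] * q" by (rule degree_power_le)
    then have "degree ([:1, 1::'e:] ^ q) \<le> q" by simp
    then show ?thesis using False by (auto simp: Q_def coeff_eq_0 coeff_1)
  qed
  have "Q = 0"
  proof (rule poly_eqI_degree[of F])
    fix x assume "x \<in> F"
    moreover have "1 + x \<in> F" using sf_add[OF sf sf_1[OF sf] \<open>x \<in> F\<close>] .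
    ultimately have "(1 + x) ^ q = 1 + x" "x ^ q = x" using fermat by auto
    then show "poly Q x = poly 0 x" by (simp add: Q_def poly_monom)
  next
    have "degree Q < q"
    proof (rule degree_lessI)
      show "Q \<noteq> 0 \<or> q > 0" using q2 by simp
      show "\<forall>k\<ge>q. coeff Q k = 0" using q2 by (auto simp: cQ)
    qed
    then show "degree Q < card F" using q by simp
  qed (use q q2 in simp)
  then have "coeff Q j = 0" by simp
  then show ?thesis using assms by (simp add: cQ)
qed

lemma frob_add: "(a + b) ^ q = a ^ q + (b::'e) ^ q"
proof -
  have "(a + b) ^ q = (\<Sum>k\<le>q. of_nat (q choose k) * a ^ k * b ^ (q - k))" by (rule binomial_ring)
  also have "\<dots> = (\<Sum>k\<le>q. (if k = q then a ^ q else 0) + (if k = 0 then b ^ q else 0))"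
  proof (intro sum.cong refl)
    fix k assume "k \<in> {..q}"
    then show "of_nat (q choose k) * a ^ k * b ^ (q - k) = (if k = q then a ^ q else 0) + (if k = 0 then b ^ q else 0)"
      using choose_zero[of k] q2 by auto
  qed
  also have "\<dots> = a ^ q + b ^ q" by (simp add: sum.distrib)
  finally show ?thesis .
qed

lemma frob_pow_add: "(a + b) ^ (q ^ n) = a ^ (q ^ n) + (b::'e) ^ (q ^ n)"
proof (induction n)
  case 0 then show ?case by simp
next
  case (Suc n)
  have "(a + b) ^ (q ^ Suc n) = ((a + b) ^ (q ^ n)) ^ q" by (simp only: power_Suc2 power_mult)
  also have "\<dots> = (a ^ (q ^ n)) ^ q + (b ^ (q ^ n)) ^ q" by (simp add: Suc frob_add)
  also have "\<dots> = a ^ (q ^ Suc n) + b ^ (q ^ Suc n)" by (simp only: power_Suc2 power_mult)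
  finally show ?case .
qed

lemma frob_pow_inj: "y ^ (q ^ n) = z ^ (q ^ n) \<Longrightarrow> y = (z::'e)"
proof -
  assume e: "y ^ (q ^ n) = z ^ (q ^ n)"
  have "y ^ (q ^ n) = (y - z) ^ (q ^ n) + z ^ (q ^ n)" using frob_pow_add[of "y - z" z n] by simp
  then have "(y - z) ^ (q ^ n) = 0" using e by simp
  then show ?thesis by simp
qed

lemma frob_uminus: "(- a) ^ q = - ((a::'e) ^ q)"
proof -
  have "(- a + a) ^ q = (- a) ^ q + a ^ q" by (rule frob_add)
  moreover have "(- a + a) ^ q = 0" using q2 by simp
  ultimately have "(- a) ^ q + a ^ q = 0" by simp
  then show ?thesis by (simp add: eq_neg_iff_add_eq_0)
qed

lemma alpha_nz: "\<alpha> \<noteq> 0"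
proof
  assume "\<alpha> = 0"
  then have "\<alpha> ^ l = 0" using l by simp
  then show False using al by simp
qed

lemma alpha_mod: "\<alpha> ^ a = \<alpha> ^ (a mod l)"
proof -
  have "\<alpha> ^ a = \<alpha> ^ (l * (a div l) + a mod l)" by simp
  also have "\<dots> = \<alpha> ^ (a mod l)" by (simp only: power_add power_mult al) simp
  finally show ?thesis .
qed

lemma alpha_eq_lt: assumes "x < l" "y < l" "\<alpha> ^ x = \<alpha> ^ y" shows "x = y"
proof (rule ccontr)
  assume ne: "x \<noteq> y"
  have *: False if "a < b" "b < l" "\<alpha> ^ a = \<alpha> ^ b" for a b
  proof -
    have "\<alpha> ^ b = \<alpha> ^ (a + (b - a))" using that by simp
    then have "\<alpha> ^ b = \<alpha> ^ a * \<alpha> ^ (b - a)" by (simp only: power_add)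
    then have "\<alpha> ^ (b - a) = 1" using that(3) alpha_nz by simp
    then show False using ord that by auto
  qed
  show False using ne assms *[of x y] *[of y x] by (cases "x < y") auto
qed

lemma alpha_eq: "\<alpha> ^ a = \<alpha> ^ b \<longleftrightarrow> a mod l = b mod l"
proof
  assume "\<alpha> ^ a = \<alpha> ^ b"
  then have "\<alpha> ^ (a mod l) = \<alpha> ^ (b mod l)" by (simp add: alpha_mod[symmetric])
  then show "a mod l = b mod l" using l by (intro alpha_eq_lt) auto
next
  assume "a mod l = b mod l" then show "\<alpha> ^ a = \<alpha> ^ b" by (metis alpha_mod)
qed

lemma cancel_q: "(i * q ^ n) mod l = (j * q ^ n) mod l \<Longrightarrow> i mod l = j mod l"
proof -
  assume "(i * q ^ n) mod l = (j * q ^ n) mod l"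
  then have "\<alpha> ^ (i * q ^ n) = \<alpha> ^ (j * q ^ n)" by (simp add: alpha_eq)
  then have "(\<alpha> ^ i) ^ (q ^ n) = (\<alpha> ^ j) ^ (q ^ n)" by (simp add: power_mult)
  then have "\<alpha> ^ i = \<alpha> ^ j" by (rule frob_pow_inj)
  then show ?thesis by (simp add: alpha_eq)
qed

end

context cycl begin

abbreviation "Cs \<equiv> cyc_coset q l"
abbreviation "T \<equiv> cyc_reps q l"
definition negm :: "nat \<Rightarrow> nat" where "negm x = (l - x mod l) mod l"

lemma coset_sub: "Cs i \<subseteq> {..<l}"
  using l by (auto simp: cyc_coset_def)
lemma coset_fin: "finite (Cs i)" using coset_sub finite_subset by blast
lemma coset_self: "i mod l \<in> Cs i"
  unfolding cyc_coset_def by (rule CollectI, rule exI[of _ 0]) simp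
lemma coset_ne: "Cs i \<noteq> {}" using coset_self by blast
lemma coset_mod: "Cs (i mod l) = Cs i"
  unfolding cyc_coset_def by (simp add: mod_mult_left_eq)

lemma coset_subset: assumes "x \<in> Cs i" shows "Cs x \<subseteq> Cs i"
proof
  fix y assume "y \<in> Cs x"
  obtain a where a: "x = i * q ^ a mod l" using assms by (auto simp: cyc_coset_def)
  obtain b where b: "y = x * q ^ b mod l" using \<open>y \<in> Cs x\<close> by (auto simp: cyc_coset_def)
  have "y = (i * q ^ a * q ^ b) mod l" by (simp add: a b mod_mult_left_eq)
  also have "i * q ^ a * q ^ b = i * q ^ (a + b)" by (simp add: power_add)
  finally show "y \<in> Cs i" by (auto simp: cyc_coset_def)
qed

lemma period: "\<exists>k\<ge>1. (i * q ^ k) mod l = i mod l"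
proof -
  define f where "f n = (i * q ^ n) mod l" for n
  have "\<not> inj_on f {..l}"
  proof
    assume "inj_on f {..l}"
    moreover have "f ` {..l} \<subseteq> {..<l}" using l by (auto simp: f_def)
    ultimately have "card {..l} \<le> card {..<l}" by (intro card_inj_on_le) auto
    then show False by simp
  qed
  then obtain a b where ab: "a \<le> l" "b \<le> l" "a \<noteq> b" "f a = f b" unfolding inj_on_def by auto
  have *: "\<exists>k\<ge>1. (i * q ^ k) mod l = i mod l" if "a < b" "f a = f b" for a b
  proof -
    have "(i * q ^ a) mod l = ((i * q ^ (b - a)) * q ^ a) mod l"
      using that by (simp add: f_def power_add[symmetric] mult.assoc)
    then have "i mod l = (i * q ^ (b - a)) mod l" by (rule cancel_q)
    then show ?thesis using that by (intro exI[of _ "b - a"]) auto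
  qed
  show ?thesis using ab *[of a b] *[of b a] by (cases "a < b") auto
qed

lemma coset_sym: assumes "x \<in> Cs i" shows "i mod l \<in> Cs x"
proof -
  obtain k where k: "k \<ge> 1" "(i * q ^ k) mod l = i mod l" using period by blast
  obtain a where a: "x = i * q ^ a mod l" using assms by (auto simp: cyc_coset_def)
  have pw: "(i * q ^ (k * n)) mod l = i mod l" for n
  proof (induction n)
    case 0 then show ?case by simp
  next
    case (Suc n)
    have "(i * q ^ (k * Suc n)) mod l = ((i * q ^ (k * n)) * q ^ k) mod l"
      by (simp add: power_add ac_simps)
    also have "\<dots> = (((i * q ^ (k * n)) mod l) * q ^ k) mod l" by (simp add: mod_mult_left_eq)
    also have "\<dots> = (i * q ^ k) mod l" by (simp add: Suc mod_mult_left_eq)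
    finally show ?case using k by simp
  qed
  have "k * a = a + (k - 1) * a" using k by (simp add: algebra_simps)
  then have "i mod l = (i * q ^ a * q ^ ((k - 1) * a)) mod l"
    using pw[of a] by (simp add: power_add mult.assoc)
  also have "\<dots> = (x * q ^ ((k - 1) * a)) mod l" by (simp add: a mod_mult_left_eq)
  finally show ?thesis by (auto simp: cyc_coset_def)
qed

lemma coset_eq: assumes "x \<in> Cs i" shows "Cs x = Cs i"
proof
  show "Cs x \<subseteq> Cs i" by (rule coset_subset[OF assms])
  have "Cs (i mod l) \<subseteq> Cs x" by (rule coset_subset[OF coset_sym[OF assms]])
  then show "Cs i \<subseteq> Cs x" by (simp add: coset_mod)
qed

lemma Min_coset: "Min (Cs i) \<in> Cs i" using coset_fin coset_ne by (rule Min_in)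

lemma Min_in_T: "Min (Cs i) \<in> T"
proof -
  have "Cs (Min (Cs i)) = Cs i" by (rule coset_eq[OF Min_coset])
  moreover have "Min (Cs i) < l" using Min_coset coset_sub by blast
  ultimately show ?thesis by (simp add: cyc_reps_def)
qed

lemma T_lt: "s \<in> T \<Longrightarrow> s < l" by (simp add: cyc_reps_def)
lemma T_self: "s \<in> T \<Longrightarrow> s \<in> Cs s" using coset_self[of s] T_lt by simp
lemma T_fin: "finite T" using T_lt by (metis finite_lessThan finite_subset lessThan_iff subsetI)

lemma T_union: "(\<Union>s\<in>T. Cs s) = {..<l}"
proof
  show "(\<Union>s\<in>T. Cs s) \<subseteq> {..<l}" using coset_sub by blast
  show "{..<l} \<subseteq> (\<Union>s\<in>T. Cs s)"
  proof
    fix i assume "i \<in> {..<l}"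
    then have "i \<in> Cs i" using coset_self[of i] by simp
    then have "i \<in> Cs (Min (Cs i))" using coset_eq[OF Min_coset] by simp
    then show "i \<in> (\<Union>s\<in>T. Cs s)" using Min_in_T by blast
  qed
qed

lemma T_disj: "s \<in> T \<Longrightarrow> s' \<in> T \<Longrightarrow> s \<noteq> s' \<Longrightarrow> Cs s \<inter> Cs s' = {}"
proof (rule ccontr)
  assume a: "s \<in> T" "s' \<in> T" "s \<noteq> s'" "Cs s \<inter> Cs s' \<noteq> {}"
  then obtain x where "x \<in> Cs s" "x \<in> Cs s'" by blast
  then have "Cs s = Cs s'" using coset_eq by metis
  then have "Min (Cs s) = Min (Cs s')" by simp
  then show False using a(1-3) by (simp add: cyc_reps_def)
qed

lemma negm_alt: "x < l \<Longrightarrow> negm x = (if x = 0 then 0 else l - x)"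
  by (auto simp: negm_def)
lemma negm_lt: "negm x < l" using l by (simp add: negm_def)
lemma negm_negm: "x < l \<Longrightarrow> negm (negm x) = x"
  using negm_lt[of x] by (auto simp: negm_alt)
lemma negm_int: "int (negm x) = (- int x) mod int l"
proof -
  have "int (negm x) = int ((l - x mod l) mod l)" by (simp add: negm_def)
  also have "\<dots> = (int l - int (x mod l)) mod int l"
    using l by (simp add: of_nat_mod of_nat_diff less_imp_le)
  also have "\<dots> = (- int (x mod l)) mod int l" by (simp add: mod_diff_left_eq[symmetric])
  also have "\<dots> = (- int x) mod int l" by (simp add: of_nat_mod mod_minus_eq)
  finally show ?thesis .
qed

lemma negm_mult: "negm ((s * q ^ j) mod l) = (negm s * q ^ j) mod l"
proof -
  have "int (negm ((s * q ^ j) mod l)) = (- int ((s * q ^ j) mod l)) mod int l" by (rule negm_int)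
  also have "\<dots> = (- (int s * int q ^ j)) mod int l" by (simp add: of_nat_mod mod_minus_eq)
  also have "\<dots> = (((- int s) mod int l) * int q ^ j) mod int l" by (simp add: mod_mult_left_eq)
  also have "\<dots> = int ((negm s * q ^ j) mod l)" by (simp add: negm_int of_nat_mod)
  finally show ?thesis by simp
qed

lemma negm_coset: "negm ` Cs s = Cs (negm s)"
proof
  show "negm ` Cs s \<subseteq> Cs (negm s)" unfolding cyc_coset_def by (auto simp: negm_mult)
  show "Cs (negm s) \<subseteq> negm ` Cs s"
  proof
    fix y assume "y \<in> Cs (negm s)"
    then obtain j where "y = (negm s * q ^ j) mod l" by (auto simp: cyc_coset_def)
    then have "y = negm ((s * q ^ j) mod l)" by (simp add: negm_mult)
    moreover have "(s * q ^ j) mod l \<in> Cs s" by (auto simp: cyc_coset_def)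
    ultimately show "y \<in> negm ` Cs s" by blast
  qed
qed

lemma negm_inj: "inj_on negm (Cs s)"
  by (rule inj_on_inverseI[where g = negm]) (use coset_sub negm_negm in blast)

abbreviation "N \<equiv> neg_rep q l"
lemma N_def': "N s = Min (Cs (negm s))" by (simp add: neg_rep_def negm_def)
lemma N_T: "N s \<in> T" by (simp add: N_def' Min_in_T)
lemma N_coset: "Cs (N s) = Cs (negm s)" by (simp add: N_def' coset_eq[OF Min_coset])
lemma N_N: assumes "s \<in> T" shows "N (N s) = s"
proof -
  have "N s \<in> Cs (negm s)" by (simp add: N_def' Min_coset)
  then have "negm (N s) \<in> Cs (negm (negm s))" using negm_coset by blast
  then have "negm (N s) \<in> Cs s" using negm_negm T_lt[OF assms] by simp
  then have "Cs (negm (N s)) = Cs s" by (rule coset_eq)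
  then show ?thesis using assms by (simp add: N_def' cyc_reps_def)
qed
lemma N_bij: "bij_betw N T T"
  by (rule bij_betwI[where g = N]) (auto simp: N_T N_N)

end

lemma frob_prod_coeff:
  fixes \<phi> :: "'e::field \<Rightarrow> 'e"
  assumes add: "\<And>x y. \<phi> (x + y) = \<phi> x + \<phi> y" and mul: "\<And>x y. \<phi> (x * y) = \<phi> x * \<phi> y"
    and neg: "\<And>x. \<phi> (- x) = - \<phi> x" and z: "\<phi> 0 = 0" and one1: "\<phi> 1 = 1"
    and fin: "finite A"
  shows "coeff (\<Prod>i\<in>A. [:- \<phi> (\<beta> i), 1:]) k = \<phi> (coeff (\<Prod>i\<in>A. [:- \<beta> i, 1:]) k)"
  using fin
proof (induction A arbitrary: k rule: finite_induct)
  case empty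
  then show ?case by (cases k) (simp_all add: one1 z)
next
  case (insert x A)
  have sub: "\<phi> (a - b) = \<phi> a - \<phi> b" for a b using add[of a "- b"] neg[of b] by simp
  let ?R = "\<Prod>i\<in>A. [:- \<beta> i, 1:]" and ?R' = "\<Prod>i\<in>A. [:- \<phi> (\<beta> i), 1:]"
  have c: "coeff ([:a, 1:] * p) k = a * coeff p k + (case k of 0 \<Rightarrow> 0 | Suc j \<Rightarrow> coeff p j)" for a and p :: "'e poly"
    by (simp add: mult_pCons_left coeff_pCons split: nat.split)
  have "coeff (\<Prod>i\<in>insert x A. [:- \<phi> (\<beta> i), 1:]) k = coeff ([:- \<phi> (\<beta> x), 1:] * ?R') k"
    using insert by simp
  also have "\<dots> = - \<phi> (\<beta> x) * coeff ?R' k + (case k of 0 \<Rightarrow> 0 | Suc j \<Rightarrow> coeff ?R' j)" by (rule c)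
  also have "\<dots> = \<phi> (- \<beta> x * coeff ?R k + (case k of 0 \<Rightarrow> 0 | Suc j \<Rightarrow> coeff ?R j))"
    using insert.IH by (simp add: add mul neg z sub split: nat.split)
  also have "- \<beta> x * coeff ?R k + (case k of 0 \<Rightarrow> 0 | Suc j \<Rightarrow> coeff ?R j) = coeff ([:- \<beta> x, 1:] * ?R) k"
    by (rule c[symmetric])
  also have "\<dots> = coeff (\<Prod>i\<in>insert x A. [:- \<beta> i, 1:]) k" using insert by simp
  finally show ?case .
qed


context cycl begin

abbreviation "M \<equiv> Mpoly q l \<alpha>"

lemma qmap_bij: "bij_betw (\<lambda>i. (i * q) mod l) (Cs s) (Cs s)"
proof -
  have into: "(\<lambda>i. (i * q) mod l) ` Cs s \<subseteq> Cs s"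
  proof
    fix y assume "y \<in> (\<lambda>i. (i * q) mod l) ` Cs s"
    then obtain i where i: "i \<in> Cs s" "y = (i * q) mod l" by auto
    have "(i * q) mod l \<in> Cs i" unfolding cyc_coset_def by (rule CollectI, rule exI[of _ 1]) simp
    then show "y \<in> Cs s" using coset_subset[OF i(1)] i(2) by blast
  qed
  have inj: "inj_on (\<lambda>i. (i * q) mod l) (Cs s)"
  proof
    fix x y assume xy: "x \<in> Cs s" "y \<in> Cs s" "(x * q) mod l = (y * q) mod l"
    then have "x mod l = y mod l" using cancel_q[of x 1 y] by simp
    moreover have "x < l" "y < l" using xy coset_sub by auto
    ultimately show "x = y" by simp
  qed
  have "(\<lambda>i. (i * q) mod l) ` Cs s = Cs s"
    using card_image[OF inj] into coset_fin by (intro card_subset_eq) auto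
  then show ?thesis using inj by (simp add: bij_betw_def)
qed

lemma M_over: "poly_over F (M s)"
proof -
  define \<phi> where "\<phi> y = y ^ q" for y :: 'e
  have "coeff (M s) k = \<phi> (coeff (M s) k)" for k
  proof -
    have "coeff (\<Prod>i\<in>Cs s. [:- \<phi> (\<alpha> ^ i), 1:]) k = \<phi> (coeff (M s) k)"
      unfolding Mpoly_def
      by (rule frob_prod_coeff) (use q2 coset_fin in \<open>simp_all add: \<phi>_def frob_add frob_uminus power_mult_distrib\<close>)
    moreover have "(\<Prod>i\<in>Cs s. [:- \<phi> (\<alpha> ^ i), 1:]) = (\<Prod>i\<in>Cs s. [:- (\<alpha> ^ ((i * q) mod l)), 1:])"
      by (intro prod.cong refl) (simp add: \<phi>_def power_mult[symmetric] alpha_mod[symmetric])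
    moreover have "\<dots> = M s"
      unfolding Mpoly_def by (rule prod.reindex_bij_betw[OF qmap_bij, of "\<lambda>j. [:- (\<alpha> ^ j), 1:]"])
    ultimately show ?thesis by simp
  qed
  then show ?thesis unfolding poly_over_def using fixed_in_F by (metis \<phi>_def)
qed

lemma prod_M: "(\<Prod>s\<in>T. M s) = monom 1 l - 1"
proof -
  have "(\<Prod>s\<in>T. M s) = (\<Prod>i\<in>(\<Union>s\<in>T. Cs s). [:- (\<alpha> ^ i), 1:])"
    unfolding Mpoly_def by (rule prod.UNION_disjoint[symmetric]) (use T_fin coset_fin T_disj in auto)
  also have "\<dots> = (\<Prod>i<l. [:- (\<alpha> ^ i), 1:])" by (simp add: T_union)
  also have "\<dots> = monom 1 l - 1"
  proof (rule poly_eqI_degree_lead_coeff[where A = "(\<lambda>i. \<alpha> ^ i) ` {..<l}"])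
    have dp: "degree (\<Prod>i<l. [:- (\<alpha> ^ i), 1::'e:]) = l" by (simp add: degree_prod_eq_sum_degree)
    have lp: "lead_coeff (\<Prod>i<l. [:- (\<alpha> ^ i), 1::'e:]) = 1" by (simp add: lead_coeff_prod)
    show "coeff (\<Prod>i<l. [:- (\<alpha> ^ i), 1:]) l = coeff (monom 1 l - 1) l"
      using dp lp l by (simp add: coeff_1)
    have "inj_on (\<lambda>i. \<alpha> ^ i) {..<l}" by (rule inj_onI) (auto intro: alpha_eq_lt)
    then show "card ((\<lambda>i. \<alpha> ^ i) ` {..<l}) \<ge> l" by (simp add: card_image)
    show "degree (\<Prod>i<l. [:- (\<alpha> ^ i), 1:]) \<le> l" using dp by simp
    show "degree (monom 1 l - 1 :: 'e poly) \<le> l"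
      using l by (intro degree_diff_le) (auto intro: degree_monom_le)
    fix z assume "z \<in> (\<lambda>i. \<alpha> ^ i) ` {..<l}"
    then obtain j where j: "j < l" "z = \<alpha> ^ j" by auto
    have "poly (\<Prod>i<l. [:- (\<alpha> ^ i), 1:]) z = 0" using j by (auto simp: poly_prod)
    moreover have "poly (monom 1 l - 1) z = 0"
      using j al by (simp add: poly_monom power_mult[symmetric] mult.commute[of j] power_mult)
    ultimately show "poly (\<Prod>i<l. [:- (\<alpha> ^ i), 1:]) z = poly (monom 1 l - 1) z" by simp
  qed
  finally show ?thesis .
qed

lemma CHAR_pos: "CHAR('e) > 0"
proof -
  have "\<not> inj_on (\<lambda>n. of_nat n :: 'e) {..q}"
  proof
    assume "inj_on (\<lambda>n. of_nat n :: 'e) {..q}"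
    moreover have "(\<lambda>n. of_nat n :: 'e) ` {..q} \<subseteq> F" using sf sf_of_nat by auto
    ultimately have "card {..q} \<le> card F" using fin by (intro card_inj_on_le) auto
    then show False using q by simp
  qed
  then obtain a b where ab: "a \<noteq> b" "(of_nat a :: 'e) = of_nat b" unfolding inj_on_def by auto
  have *: "\<exists>n>0. (of_nat n :: 'e) = 0" if "a < b" "(of_nat a :: 'e) = of_nat b" for a b
  proof -
    have "(of_nat b :: 'e) = of_nat a + of_nat (b - a)" using that by (simp flip: of_nat_add)
    then show ?thesis using that by (intro exI[of _ "b - a"]) auto
  qed
  have "\<exists>n>0. (of_nat n :: 'e) = 0" using ab *[of a b] *[of b a] by (cases "a < b") auto
  then show ?thesis by (simp add: CHAR_pos_iff)
qed

lemma CHAR_prime: "prime CHAR('e)" using CHAR_pos by (rule prime_CHAR_semidom)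

end

lemma frob_char:
  fixes a b :: "'a::comm_ring_1"
  assumes "prime CHAR('a)"
  shows "(a + b) ^ CHAR('a) = a ^ CHAR('a) + b ^ CHAR('a)"
proof -
  let ?p = "CHAR('a)"
  have p0: "?p > 0" using assms prime_gt_0_nat by blast
  have "(a + b) ^ ?p = (\<Sum>k\<le>?p. of_nat (?p choose k) * a ^ k * b ^ (?p - k))" by (rule binomial_ring)
  also have "\<dots> = (\<Sum>k\<le>?p. (if k = ?p then a ^ ?p else 0) + (if k = 0 then b ^ ?p else 0))"
  proof (intro sum.cong refl)
    fix k assume "k \<in> {..?p}"
    show "of_nat (?p choose k) * a ^ k * b ^ (?p - k) = (if k = ?p then a ^ ?p else 0) + (if k = 0 then b ^ ?p else 0)"
    proof (cases "k = 0 \<or> k = ?p")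
      case True then show ?thesis using p0 by auto
    next
      case False
      then have "?p dvd (?p choose k)" using \<open>k \<in> {..?p}\<close> assms by (intro dvd_choose_prime) auto
      then have "(of_nat (?p choose k) :: 'a) = 0" by (simp add: of_nat_eq_0_iff_char_dvd)
      then show ?thesis using False by simp
    qed
  qed
  also have "\<dots> = a ^ ?p + b ^ ?p" by (simp add: sum.distrib)
  finally show ?thesis .
qed

lemma frob_char_diff_pow:
  fixes a b :: "'a::comm_ring_1"
  assumes "prime CHAR('a)"
  shows "(a - b) ^ (CHAR('a) ^ t) = a ^ (CHAR('a) ^ t) - b ^ (CHAR('a) ^ t)"
proof (induction t)
  case 0 then show ?case by simp
next
  case (Suc t)
  let ?p = "CHAR('a)"
  have "(a - b) ^ (?p ^ Suc t) = ((a - b) ^ (?p ^ t)) ^ ?p" by (simp only: power_Suc2 power_mult)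
  also have "\<dots> = (a ^ (?p ^ t) + (- (b ^ (?p ^ t)))) ^ ?p" by (simp add: Suc)
  also have "\<dots> = (a ^ (?p ^ t)) ^ ?p + (- (b ^ (?p ^ t))) ^ ?p" by (rule frob_char[OF assms])
  also have "(- (b ^ (?p ^ t))) ^ ?p = - ((b ^ (?p ^ t)) ^ ?p)" by (rule minus_power_prime_CHAR) (use assms in auto)
  also have "(a ^ (?p ^ t)) ^ ?p + - ((b ^ (?p ^ t)) ^ ?p) = a ^ (?p ^ Suc t) - b ^ (?p ^ Suc t)"
    by (simp only: power_Suc2 power_mult) simp
  finally show ?case .
qed


context qcx begin
lemma cg_prod: "(\<And>i. i \<in> A \<Longrightarrow> cg (f i) (g i)) \<Longrightarrow> cg (prod f A) (prod g A)"
  by (induction A rule: infinite_finite_induct) (auto intro: cg_mult)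
lemma cg_power: "cg a b \<Longrightarrow> cg (a ^ n) (b ^ n)"
  by (induction n) (auto intro: cg_mult)
end

locale both = qcx F m + cycl F q l \<alpha> for F :: "'e::field set" and m q l \<alpha>
begin

lemma alpha_negm: "\<alpha> ^ i * \<alpha> ^ (negm i) = 1"
proof -
  have "int ((i + negm i) mod l) = (int i + (- int i) mod int l) mod int l"
    by (simp add: of_nat_mod negm_int)
  also have "\<dots> = 0" by (simp add: mod_add_right_eq)
  finally have "(i + negm i) mod l = 0 mod l" by simp
  then have "\<alpha> ^ (i + negm i) = \<alpha> ^ 0" by (simp only: alpha_eq)
  then show ?thesis by (simp add: power_add)
qed

lemma ring_aux: "(A::'a::comm_ring_1) * B = 1 \<Longrightarrow> y * z = w \<Longrightarrow> - A + y - (- A) * y * (- B + z) = A * (w - 1)"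
proof -
  assume h: "A * B = 1" "y * z = w"
  have "- A + y - (- A) * y * (- B + z) = - A + y - (A * B) * y + A * (y * z)" by (simp add: algebra_simps)
  then show ?thesis using h by (simp add: algebra_simps)
qed

lemma factor_cg: "cg (P [:- (\<alpha> ^ i), 1:]) ([:- (\<alpha> ^ i):] * monom 1 (m - 1) * [:- (\<alpha> ^ negm i), 1:])"
proof -
  define a where "a = \<alpha> ^ i"
  define b where "b = \<alpha> ^ negm i"
  have "a * b = 1" using alpha_negm by (simp add: a_def b_def)
  then have ab: "[:a:] * [:b:] = (1 :: 'e poly)" by (simp add: mult.commute)
  have P1: "P [:- a, 1:] = - [:a:] + monom 1 (m - 1)" by (simp add: P_def pcompose_pCons)
  have m1: "monom (1::'e) (m - 1) * monom 1 1 = monom 1 m" using mpos by (simp add: mult_monom)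
  have lin: "[:- b, 1:] = - [:b:] + monom 1 1" by (simp add: monom_altdef)
  have na: "[:- a:] = - [:a:]" by simp
  have "P [:- a, 1:] - [:- a:] * monom 1 (m - 1) * [:- b, 1:] = [:a:] * X"
    unfolding P1 lin na X_def' by (rule ring_aux[OF ab m1])
  then have "X dvd P [:- a, 1:] - [:- a:] * monom 1 (m - 1) * [:- b, 1:]" by (metis dvd_triv_right)
  then show ?thesis unfolding cg_def a_def b_def .
qed

definition U :: "nat \<Rightarrow> 'e poly" where "U s = (\<Prod>i\<in>Cs s. [:- (\<alpha> ^ i):] * monom 1 (m - 1))"

lemma PM: "cg (P (M s)) (U s * M (N s))"
proof -
  have "P (M s) = (\<Prod>i\<in>Cs s. P [:- (\<alpha> ^ i), 1:])" by (simp add: Mpoly_def P_prod)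
  also have "cg \<dots> (\<Prod>i\<in>Cs s. [:- (\<alpha> ^ i):] * monom 1 (m - 1) * [:- (\<alpha> ^ negm i), 1:])"
    by (rule cg_prod) (rule factor_cg)
  also have "\<dots> = U s * (\<Prod>i\<in>Cs s. [:- (\<alpha> ^ negm i), 1:])" unfolding U_def by (rule prod.distrib)
  also have "(\<Prod>i\<in>Cs s. [:- (\<alpha> ^ negm i), 1:]) = (\<Prod>j\<in>negm ` Cs s. [:- (\<alpha> ^ j), 1:])"
    by (simp add: prod.reindex[OF negm_inj])
  also have "\<dots> = M (N s)" by (simp add: Mpoly_def negm_coset N_coset)
  finally show ?thesis .
qed

lemma U_inv: "\<exists>W. poly_over F W \<and> cg (W * U s) 1"
proof -
  define c where "c = (\<Prod>i\<in>Cs s. - (\<alpha> ^ i))"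
  have Ueq: "U s = [:c:] * monom 1 ((m - 1) * card (Cs s))"
  proof -
    have "U s = (\<Prod>i\<in>Cs s. [:- (\<alpha> ^ i):]) * (\<Prod>i\<in>Cs s. monom 1 (m - 1))"
      unfolding U_def by (rule prod.distrib)
    also have "\<dots> = [:c:] * monom 1 (m - 1) ^ card (Cs s)" by (simp only: prod_to_poly prod_constant c_def)
    also have "\<dots> = [:c:] * monom 1 ((m - 1) * card (Cs s))" by (simp add: monom_power)
    finally show ?thesis .
  qed
  have c0: "c \<noteq> 0" using coset_fin alpha_nz by (simp add: c_def)
  have "c = poly (M s) 0" by (simp add: c_def Mpoly_def poly_prod)
  then have cF: "c \<in> F" using M_over[of s] by (simp add: poly_0_coeff_0 poly_over_def)
  define W where "W = [:inverse c:] * monom 1 (card (Cs s))"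
  have "W * U s = [:inverse c * c:] * (monom 1 (card (Cs s)) * monom 1 ((m - 1) * card (Cs s)))"
    by (simp add: W_def Ueq algebra_simps)
  also have "\<dots> = monom 1 (m * card (Cs s))"
  proof -
    have "card (Cs s) + (m - 1) * card (Cs s) = m * card (Cs s)" using mpos by (cases m) auto
    then show ?thesis using c0 by (simp add: mult_monom)
  qed
  finally have "cg (W * U s) 1" using X_dvd_monom_pow by (simp add: cg_def)
  moreover have "poly_over F W" unfolding W_def
    using cF sf by (intro po_mult po_const po_monom sf_inverse sf_1) auto
  ultimately show ?thesis by blast
qed

end

theorem mainTheorem15:
  fixes F :: "'e::field_gcd set" and \<alpha> :: 'e
    and p q t l m :: nat and r1 r2 :: "nat \<Rightarrow> int" and v1 v2 :: "'e poly"
  assumes "is_subfield F" and "finite F" and "q = card F"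
    and "p = CHAR('e)"
    and "t \<ge> 1" and "l \<ge> 1" and "coprime l p" and "m = l * p ^ t"
    and "\<alpha> ^ l = 1" and "\<forall>j. 0 < j \<and> j < l \<longrightarrow> \<alpha> ^ j \<noteq> 1"
    and "poly_over F v1" and "poly_over F v2"
    and "degree v1 < m" and "degree v2 < m"
    and "gcd (v1 * v2 - 1) (xm1 m) = 1"
    and "\<forall>s\<in>cyc_reps q l. 0 < r1 s \<and> r1 s < r2 s
            \<and> r2 s < int (p ^ t) - r2 (neg_rep q l s)"
  defines "M \<equiv> Mpoly q l \<alpha>" and "T \<equiv> cyc_reps q l" and "N \<equiv> neg_rep q l"
  defines "C \<equiv> qc_code F m
             (\<Prod>s\<in>T. M s ^ nat (r1 s)) (v1 * (\<Prod>s\<in>T. M s ^ nat (r1 s)))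
             (v2 * (\<Prod>s\<in>T. M s ^ nat (r2 s))) (\<Prod>s\<in>T. M s ^ nat (r2 s))"
  shows "euclid_dual F (2 * m) C =
           qc_code F m
             (\<Prod>s\<in>T. M s ^ nat (int (p ^ t) - r1 (N s)))
             (- conjbar m v2 * (\<Prod>s\<in>T. M s ^ nat (int (p ^ t) - r1 (N s))))
             (- conjbar m v1 * (\<Prod>s\<in>T. M s ^ nat (int (p ^ t) - r2 (N s))))
             (\<Prod>s\<in>T. M s ^ nat (int (p ^ t) - r2 (N s)))
         \<and> euclid_dual F (2 * m) C \<subseteq> C"
proof -
  have sfF: "is_subfield F" and finF: "finite F" and qF: "q = card F" and pC: "p = CHAR('e)"
    and l1: "l \<ge> 1" and mdef: "m = l * p ^ t" and al: "\<alpha> ^ l = 1"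
    and ordl: "\<forall>j. 0 < j \<and> j < l \<longrightarrow> \<alpha> ^ j \<noteq> 1"
    and v1F: "poly_over F v1" and v2F: "poly_over F v2"
    and gcdv: "gcd (v1 * v2 - 1) (xm1 m) = 1"
    and hyp: "\<forall>s\<in>cyc_reps q l. 0 < r1 s \<and> r1 s < r2 s \<and> r2 s < int (p ^ t) - r2 (neg_rep q l s)"
    using assms by auto
  interpret cy: cycl F q l \<alpha> using sfF finF qF l1 al ordl by unfold_locales auto
  have pprime: "prime p" using cy.CHAR_prime pC by simp
  then have p0: "p > 0" by (simp add: prime_gt_0_nat)
  have mpos: "m > 0" using l1 p0 mdef by simp
  interpret bo: both F m q l \<alpha> using sfF finF qF l1 al ordl mpos by unfold_locales auto
  let ?T = "cyc_reps q l" and ?N = "neg_rep q l" and ?M = "Mpoly q l \<alpha>"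
  define Pt where "Pt = int (p ^ t)"
  have ex: "0 < r1 s" "r1 s < r2 s" "r2 s + r2 (?N s) < Pt" "0 < r1 (?N s)" "r1 (?N s) < r2 (?N s)"
    if "s \<in> ?T" for s
    using hyp that cy.N_T[of s] by (auto simp: Pt_def)
  have e1: "nat (r1 s) + nat (Pt - r1 s) = p ^ t" if "s \<in> ?T" for s
  proof -
    have "nat (r1 s) + nat (Pt - r1 s) = nat Pt" using ex[OF that] by linarith
    then show ?thesis by (simp only: Pt_def nat_int)
  qed
  have e5: "nat (r2 s) + nat (Pt - r2 s) = p ^ t" if "s \<in> ?T" for s
  proof -
    have "nat (r2 s) + nat (Pt - r2 s) = nat Pt" using ex[OF that] by linarith
    then show ?thesis by (simp only: Pt_def nat_int)
  qed
  have e2: "nat (r1 s) + nat (r2 s - r1 s) = nat (r2 s)" if "s \<in> ?T" for s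
    using ex[OF that] by linarith
  have e3: "nat (r2 s) + nat (Pt - r1 (?N s) - r2 s) = nat (Pt - r1 (?N s))" if "s \<in> ?T" for s
    using ex[OF that] by linarith
  have e4: "nat (r2 s) + nat (Pt - r2 (?N s) - r2 s) = nat (Pt - r2 (?N s))" if "s \<in> ?T" for s
    using ex[OF that] by linarith
  have pm: "(\<Prod>s\<in>?T. ?M s ^ a s) * (\<Prod>s\<in>?T. ?M s ^ b s) = (\<Prod>s\<in>?T. ?M s ^ (a s + b s))" for a b
    by (simp add: prod.distrib power_add)
  have Xeq: "(\<Prod>s\<in>?T. ?M s ^ (p ^ t)) = xm1 m"
  proof -
    have "(\<Prod>s\<in>?T. ?M s ^ (p ^ t)) = (\<Prod>s\<in>?T. ?M s) ^ (p ^ t)" by (rule prod_power_distrib[symmetric])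
    also have "\<dots> = (monom 1 l - 1) ^ (CHAR('e poly) ^ t)" by (simp add: cy.prod_M pC)
    also have "\<dots> = monom 1 l ^ (CHAR('e poly) ^ t) - 1 ^ (CHAR('e poly) ^ t)"
      by (rule frob_char_diff_pow) (use pprime pC in simp)
    also have "\<dots> = xm1 m" by (simp add: xm1_def monom_power pC mdef)
    finally show ?thesis .
  qed
  define g1 where "g1 = (\<Prod>s\<in>?T. ?M s ^ nat (r1 s))"
  define g2 where "g2 = (\<Prod>s\<in>?T. ?M s ^ nat (r2 s))"
  define h1 where "h1 = (\<Prod>s\<in>?T. ?M s ^ nat (int (p ^ t) - r1 (?N s)))"
  define h2 where "h2 = (\<Prod>s\<in>?T. ?M s ^ nat (int (p ^ t) - r2 (?N s)))"
  define H1 where "H1 = (\<Prod>s\<in>?T. ?M s ^ nat (Pt - r1 s))"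
  define H2 where "H2 = (\<Prod>s\<in>?T. ?M s ^ nat (Pt - r2 s))"
  define k0 where "k0 = (\<Prod>s\<in>?T. ?M s ^ nat (r2 s - r1 s))"
  define k1 where "k1 = (\<Prod>s\<in>?T. ?M s ^ nat (Pt - r1 (?N s) - r2 s))"
  define k2 where "k2 = (\<Prod>s\<in>?T. ?M s ^ nat (Pt - r2 (?N s) - r2 s))"
  have overM: "poly_over F (\<Prod>s\<in>?T. ?M s ^ f s)" for f
    by (intro po_prod[OF sfF] po_power[OF sfF] cy.M_over)
  have XH1: "xm1 m = g1 * H1" unfolding g1_def H1_def pm Xeq[symmetric]
    by (intro prod.cong refl) (simp add: e1)
  have XH2: "xm1 m = g2 * H2" unfolding g2_def H2_def pm Xeq[symmetric]
    by (intro prod.cong refl) (simp add: e5)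
  have f0: "g2 = g1 * k0" unfolding g1_def g2_def k0_def pm
    by (intro prod.cong refl) (simp add: e2)
  have f1: "h1 = g2 * k1" unfolding h1_def g2_def k1_def pm Pt_def[symmetric]
    by (intro prod.cong refl) (simp add: e3)
  have f2: "h2 = g2 * k2" unfolding h2_def g2_def k2_def pm Pt_def[symmetric]
    by (intro prod.cong refl) (simp add: e4)
  have "\<forall>s. \<exists>w. poly_over F w \<and> bo.cg (w * bo.U s) 1" using bo.U_inv by blast
  then have "\<exists>W. \<forall>s. poly_over F (W s) \<and> bo.cg (W s * bo.U s) 1" by (rule choice)
  then obtain W where W: "\<And>s. poly_over F (W s) \<and> bo.cg (W s * bo.U s) 1" by blast
  have Ph: "bo.cg (bo.P (\<Prod>s\<in>?T. ?M s ^ E s)) ((\<Prod>s\<in>?T. bo.U s ^ E s) * (\<Prod>s\<in>?T. ?M s ^ E (?N s)))"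
    for E
  proof -
    have "bo.P (\<Prod>s\<in>?T. ?M s ^ E s) = (\<Prod>s\<in>?T. bo.P (?M s) ^ E s)" by (simp add: bo.P_prod bo.P_power)
    also have "bo.cg \<dots> (\<Prod>s\<in>?T. (bo.U s * ?M (?N s)) ^ E s)"
      by (intro bo.cg_prod bo.cg_power bo.PM)
    also have "(\<Prod>s\<in>?T. (bo.U s * ?M (?N s)) ^ E s) = (\<Prod>s\<in>?T. bo.U s ^ E s) * (\<Prod>s\<in>?T. ?M (?N s) ^ E s)"
      by (simp add: power_mult_distrib prod.distrib)
    also have "(\<Prod>s\<in>?T. ?M (?N s) ^ E s) = (\<Prod>s\<in>?T. ?M (?N s) ^ E (?N (?N s)))"
      by (intro prod.cong refl) (simp add: cy.N_N)
    also have "\<dots> = (\<Prod>s\<in>?T. ?M s ^ E (?N s))"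
      by (rule prod.reindex_bij_betw[OF cy.N_bij, of "\<lambda>s. ?M s ^ E (?N s)"])
    finally show ?thesis .
  qed
  have Hinv: "bo.cg (\<Prod>s\<in>?T. ?M s ^ E (?N s)) ((\<Prod>s\<in>?T. W s ^ E s) * bo.P (\<Prod>s\<in>?T. ?M s ^ E s))" for E
  proof -
    have "bo.cg ((\<Prod>s\<in>?T. W s ^ E s) * bo.P (\<Prod>s\<in>?T. ?M s ^ E s))
             ((\<Prod>s\<in>?T. W s ^ E s) * ((\<Prod>s\<in>?T. bo.U s ^ E s) * (\<Prod>s\<in>?T. ?M s ^ E (?N s))))"
      by (intro bo.cg_mult bo.cg_refl Ph)
    also have "(\<Prod>s\<in>?T. W s ^ E s) * ((\<Prod>s\<in>?T. bo.U s ^ E s) * (\<Prod>s\<in>?T. ?M s ^ E (?N s)))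
             = (\<Prod>s\<in>?T. (W s * bo.U s) ^ E s) * (\<Prod>s\<in>?T. ?M s ^ E (?N s))"
      by (simp only: power_mult_distrib prod.distrib mult.assoc)
    also have "bo.cg \<dots> ((\<Prod>s\<in>?T. 1 ^ E s) * (\<Prod>s\<in>?T. ?M s ^ E (?N s)))"
      by (intro bo.cg_mult bo.cg_refl bo.cg_prod bo.cg_power) (use W in blast)
    also have "(\<Prod>s\<in>?T. (1::'e poly) ^ E s) * (\<Prod>s\<in>?T. ?M s ^ E (?N s)) = (\<Prod>s\<in>?T. ?M s ^ E (?N s))"
      by simp
    finally show ?thesis by (rule bo.cg_sym)
  qed
  have H1e: "H1 = (\<Prod>s\<in>?T. ?M s ^ (\<lambda>s'. nat (int (p ^ t) - r1 (?N s'))) (?N s))"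
    unfolding H1_def Pt_def by (intro prod.cong refl) (simp add: cy.N_N)
  have H2e: "H2 = (\<Prod>s\<in>?T. ?M s ^ (\<lambda>s'. nat (int (p ^ t) - r2 (?N s'))) (?N s))"
    unfolding H2_def Pt_def by (intro prod.cong refl) (simp add: cy.N_N)
  have Ph1: "bo.cg (bo.P h1) ((\<Prod>s\<in>?T. bo.U s ^ nat (int (p ^ t) - r1 (?N s))) * H1)"
    unfolding h1_def H1e by (rule Ph)
  have Ph2: "bo.cg (bo.P h2) ((\<Prod>s\<in>?T. bo.U s ^ nat (int (p ^ t) - r2 (?N s))) * H2)"
    unfolding h2_def H2e by (rule Ph)
  have Hi1: "bo.cg H1 ((\<Prod>s\<in>?T. W s ^ nat (int (p ^ t) - r1 (?N s))) * bo.P h1)"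
    unfolding h1_def H1e by (rule Hinv)
  have Hi2: "bo.cg H2 ((\<Prod>s\<in>?T. W s ^ nat (int (p ^ t) - r2 (?N s))) * bo.P h2)"
    unfolding h2_def H2e by (rule Hinv)
  have wo: "poly_over F (\<Prod>s\<in>?T. W s ^ f s)" for f
    by (intro po_prod[OF sfF] po_power[OF sfF]) (use W in blast)
  have "\<exists>e. poly_over F e \<and> bo.cg (e * (1 - v1 * v2)) 1"
  proof (rule bo.inverse_exists[OF finF])
    show "poly_over F (1 - v1 * v2)" by (intro po_diff[OF sfF] po_1[OF sfF] po_mult[OF sfF] v1F v2F)
    have "coprime (v1 * v2 - 1) (xm1 m)" using gcdv by (simp add: coprime_iff_gcd_eq_1)
    then have cop: "coprime (xm1 m) (1 - v1 * v2)"
      by (metis coprime_commute coprime_minus_left_iff minus_diff_eq)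
    fix r assume "xm1 m dvd r * (1 - v1 * v2)"
    then show "xm1 m dvd r" using cop by (simp add: coprime_dvd_mult_left_iff)
  qed
  then obtain e where e: "poly_over F e" "bo.cg (e * (1 - v1 * v2)) 1" by blast
  have main: "euclid_dual F (2 * m) (qc_code F m g1 (v1 * g1) (v2 * g2) g2) =
           qc_code F m h1 (- conjbar m v2 * h1) (- conjbar m v1 * h2) h2
         \<and> euclid_dual F (2 * m) (qc_code F m g1 (v1 * g1) (v2 * g2) g2)
            \<subseteq> qc_code F m g1 (v1 * g1) (v2 * g2) g2"
    by (rule bo.abstract_main[OF finF _ _ _ _ _ _ v1F v2F _ _ _ e(1) _ _ XH1 XH2 Ph1 Hi1 Ph2 Hi2 f0 f1 f2 e(2)])
       (simp_all only: g1_def g2_def h1_def h2_def H1_def H2_def k0_def k1_def k2_def overM wo)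
  show ?thesis using main unfolding assms(17-) g1_def g2_def h1_def h2_def .
qed


end
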